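(* Let $\lambda>1$ and $\alpha<0$ satisfy $\lambda+2\sqrt\lambda<-\frac1\alpha<(1+\sqrt\lambda)^2$ (so that for all sufficiently large $n$ the hypotheses $\frac1n+2\sqrt\lambda+\lambda<-\frac1\alpha<(1+\sqrt\lambda)^2$ hold). For integers $n,N$ let $X_{nN}=\mathbb{1}_{nN}+\alpha W_{nN}\in\mathcal{M}_n(\mathbb{C})\otimes\mathcal{M}_N(\mathbb{C})$ with $W_{nN}$ an $nN\times nN$ complex Wishart matrix with parameter $\lambda$. Then for every integer $k\ge1$ there exists $n_0$ such that for every $n\ge n_0$, almost surely there exists $N_0$ such that $X_{nN}$ is $k$-block positive for all $N\ge N_0$. Equivalently, the linear map $\Phi_N:\mathcal{M}_n(\mathbb{C})\to\mathcal{M}_N(\mathbb{C})$ whose Choi matrix is $X_{nN}$ is $k$-positive.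
   Context: Complex Wishart matrix with parameter $\lambda$: $W_{nN}=B^*B$ with $B$ a $d\times nN$ matrix of i.i.d. centred complex Gaussian entries of variance $1/(nN)$, $d/(nN)\to\lambda$ as $N\to\infty$. A matrix $X\in\mathcal{M}_n(\mathbb{C})\otimes\mathcal{M}_N(\mathbb{C})$ is $k$-block positive if $(P\otimes\mathbb{1}_N)X(P\otimes\mathbb{1}_N)$ is positive semidefinite for every rank-$k$ orthogonal projection $P\in\mathcal{M}_n(\mathbb{C})$. The Choi matrix of a linear map $\Phi:\mathcal{M}_n(\mathbb{C})\to\mathcal{M}_N(\mathbb{C})$ is $C_\Phi=\sum_{i,j=1}^nE_{ij}\otimes\Phi(E_{ij})$; $\Phi$ is $k$-positive if $\Phi\otimes\mathrm{id}_{\mathcal{M}_k}$ is positive, and $\Phi$ is $k$-positive iff $C_\Phi$ is $k$-block positive. *)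

theory Defs
  imports "HOL-Probability.Probability" "Jordan_Normal_Form.DL_Rank" "Jordan_Normal_Form.Schur_Decomposition"
begin

definition psd_mat :: "nat \<Rightarrow> complex mat \<Rightarrow> bool" where
  "psd_mat m A \<longleftrightarrow> A \<in> carrier_mat m m \<and> mat_adjoint A = A \<and>
     (\<forall>v \<in> carrier_vec m. \<exists>r::real. r \<ge> 0 \<and> (A *\<^sub>v v) \<bullet>c v = complex_of_real r)"

definition orth_proj_rank :: "nat \<Rightarrow> nat \<Rightarrow> complex mat \<Rightarrow> bool" where
  "orth_proj_rank n k P \<longleftrightarrow> P \<in> carrier_mat n n \<and> mat_adjoint P = P \<and> P * P = P
     \<and> vec_space.rank n P = k"

text \<open>P tensor identity_N, for the identification M_n(C) (x) M_N(C) = M_{nN}(C) with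
  basis index (i,a), i<n, a<N, flattened to i*N + a.\<close>
definition tensor_id :: "nat \<Rightarrow> nat \<Rightarrow> complex mat \<Rightarrow> complex mat" where
  "tensor_id n N P = mat (n*N) (n*N)
     (\<lambda>(r,c). if r mod N = c mod N then P $$ (r div N, c div N) else 0)"

definition k_block_positive :: "nat \<Rightarrow> nat \<Rightarrow> nat \<Rightarrow> complex mat \<Rightarrow> bool" where
  "k_block_positive n N k X \<longleftrightarrow>
     (\<forall>P. orth_proj_rank n k P \<longrightarrow> psd_mat (n*N) (tensor_id n N P * X * tensor_id n N P))"

definition complex_gaussian_matrix ::
  "'a measure \<Rightarrow> real \<Rightarrow> nat \<Rightarrow> nat \<Rightarrow> ('a \<Rightarrow> complex mat) \<Rightarrow> bool" where
  "complex_gaussian_matrix M s2 r c B \<longleftrightarrow>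
     (\<forall>\<omega>\<in>space M. B \<omega> \<in> carrier_mat r c) \<and>
     prob_space.indep_vars M (\<lambda>_. borel)
        (\<lambda>(i,j,b) \<omega>. if b then Re (B \<omega> $$ (i,j)) else Im (B \<omega> $$ (i,j)))
        ({..<r} \<times> {..<c} \<times> (UNIV :: bool set)) \<and>
     (\<forall>i<r. \<forall>j<c.
        distributed M lborel (\<lambda>\<omega>. Re (B \<omega> $$ (i,j))) (\<lambda>x. ennreal (normal_density 0 (sqrt (s2/2)) x)) \<and>
        distributed M lborel (\<lambda>\<omega>. Im (B \<omega> $$ (i,j))) (\<lambda>x. ennreal (normal_density 0 (sqrt (s2/2)) x)))"

end

theory Submission
  imports Defs
begin


definition Lb :: "(nat \<Rightarrow> nat \<Rightarrow> complex) \<Rightarrow> nat \<Rightarrow> nat \<Rightarrow> (nat \<Rightarrow> complex) \<Rightarrow> real" where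
  "Lb b d m y = L2_set (\<lambda>i. cmod (\<Sum>j<m. b i j * y j)) {..<d}"

definition nm :: "nat \<Rightarrow> (nat \<Rightarrow> complex) \<Rightarrow> real" where
  "nm m y = L2_set (\<lambda>j. cmod (y j)) {..<m}"

lemma Lb_add: "Lb b d m (\<lambda>j. y j + z j) \<le> Lb b d m y + Lb b d m z"
proof -
  have "Lb b d m (\<lambda>j. y j + z j) \<le> L2_set (\<lambda>i. cmod (\<Sum>j<m. b i j * y j) + cmod (\<Sum>j<m. b i j * z j)) {..<d}"
    unfolding Lb_def
    by (rule L2_set_mono) (auto simp: distrib_left sum.distrib intro: norm_triangle_ineq)
  also have "\<dots> \<le> Lb b d m y + Lb b d m z" unfolding Lb_def by (rule L2_set_triangle_ineq)
  finally show ?thesis .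
qed

lemma nm_add: "nm m (\<lambda>j. y j + z j) \<le> nm m y + nm m z"
proof -
  have "nm m (\<lambda>j. y j + z j) \<le> L2_set (\<lambda>j. cmod (y j) + cmod (z j)) {..<m}"
    unfolding nm_def by (rule L2_set_mono) (auto intro: norm_triangle_ineq)
  also have "\<dots> \<le> nm m y + nm m z" unfolding nm_def by (rule L2_set_triangle_ineq)
  finally show ?thesis .
qed

lemma Lb_scale: "Lb b d m (\<lambda>j. c * y j) = cmod c * Lb b d m y"
proof -
  have "Lb b d m (\<lambda>j. c * y j) = L2_set (\<lambda>i. cmod c * cmod (\<Sum>j<m. b i j * y j)) {..<d}"
    unfolding Lb_def
    by (rule L2_set_cong) (auto simp: sum_distrib_left norm_mult[symmetric] ac_simps)
  also have "\<dots> = cmod c * Lb b d m y" unfolding Lb_def by (simp add: L2_set_right_distrib)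
  finally show ?thesis .
qed

lemma nm_scale: "nm m (\<lambda>j. c * y j) = cmod c * nm m y"
  unfolding nm_def by (simp add: L2_set_right_distrib norm_mult)

lemma Lb_cong: "(\<And>j. j < m \<Longrightarrow> y j = z j) \<Longrightarrow> Lb b d m y = Lb b d m z"
  unfolding Lb_def by (intro L2_set_cong refl arg_cong[where f=cmod] sum.cong) auto

lemma nm_cong: "(\<And>j. j < m \<Longrightarrow> y j = z j) \<Longrightarrow> nm m y = nm m z"
  unfolding nm_def by (intro L2_set_cong) auto

lemma Lb_bound: "Lb b d m y \<le> L2_set (\<lambda>i. L2_set (\<lambda>j. cmod (b i j)) {..<m}) {..<d} * nm m y"
proof -
  have "Lb b d m y \<le> L2_set (\<lambda>i. L2_set (\<lambda>j. cmod (b i j)) {..<m} * nm m y) {..<d}"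
    unfolding Lb_def
  proof (rule L2_set_mono)
    fix i
    have "cmod (\<Sum>j<m. b i j * y j) \<le> (\<Sum>j<m. \<bar>cmod (b i j)\<bar> * \<bar>cmod (y j)\<bar>)"
      by (rule order_trans[OF norm_sum]) (simp add: norm_mult)
    also have "\<dots> \<le> L2_set (\<lambda>j. cmod (b i j)) {..<m} * nm m y"
      unfolding nm_def by (rule L2_set_mult_ineq)
    finally show "cmod (\<Sum>j<m. b i j * y j) \<le> L2_set (\<lambda>j. cmod (b i j)) {..<m} * nm m y" .
  qed simp
  also have "\<dots> = L2_set (\<lambda>i. L2_set (\<lambda>j. cmod (b i j)) {..<m}) {..<d} * nm m y"
    by (simp add: L2_set_left_distrib nm_def)
  finally show ?thesis .
qed

lemma sum_divmod:
  fixes g :: "nat \<Rightarrow> 'b::comm_monoid_add"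
  shows "(\<Sum>j<n*N. g j) = (\<Sum>i<n. \<Sum>a<N. g (i*N + a))"
proof -
  have "(\<Sum>j<n*N. g j) = (\<Sum>i<n. sum g {i*N..<i*N+N})"
    by (rule sum.nat_group[symmetric])
  also have "\<dots> = (\<Sum>i<n. \<Sum>a<N. g (i*N + a))"
  proof (rule sum.cong[OF refl])
    fix i
    have "sum g {i*N..<i*N+N} = sum g {0+i*N..<N+i*N}" by (simp add: add.commute)
    also have "\<dots> = (\<Sum>a\<in>{0..<N}. g (a + i*N))" by (rule sum.shift_bounds_nat_ivl)
    finally show "sum g {i*N..<i*N+N} = (\<Sum>a<N. g (i*N + a))"
      by (simp add: atLeast0LessThan add.commute)
  qed
  finally show ?thesis .
qed

lemma sum_divmod2:
  fixes g :: "nat \<Rightarrow> nat \<Rightarrow> 'b::comm_monoid_add"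
  shows "(\<Sum>j<n*N. g (j div N) (j mod N)) = (\<Sum>i<n. \<Sum>a<N. g i a)"
  unfolding sum_divmod
  by (intro sum.cong refl) auto

definition tens :: "nat \<Rightarrow> nat \<Rightarrow> (nat\<times>nat \<Rightarrow> complex) \<Rightarrow> (nat\<times>nat \<Rightarrow> complex) \<Rightarrow> nat \<Rightarrow> complex" where
  "tens N k u f j = (\<Sum>l<k. u (l, j div N) * f (l, j mod N))"

lemma tens_split:
  "tens N k u f j = tens N k u' f' j + tens N k (\<lambda>p. u p - u' p) f j + tens N k u' (\<lambda>p. f p - f' p) j"
  unfolding tens_def by (simp add: sum.distrib[symmetric] algebra_simps)

lemma tens_scale_u: "tens N k (\<lambda>p. c * u p) f j = c * tens N k u f j"
  unfolding tens_def by (simp add: sum_distrib_left ac_simps)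

lemma tens_scale_f: "tens N k u (\<lambda>p. c * f p) j = c * tens N k u f j"
  unfolding tens_def by (simp add: sum_distrib_left ac_simps)

lemma nm_sum: "finite L \<Longrightarrow> nm m (\<lambda>j. \<Sum>l\<in>L. g l j) \<le> (\<Sum>l\<in>L. nm m (g l))"
proof (induction L rule: finite_induct)
  case empty then show ?case by (simp add: nm_def L2_set_def)
next
  case (insert x F)
  have "nm m (\<lambda>j. \<Sum>l\<in>insert x F. g l j) = nm m (\<lambda>j. g x j + (\<Sum>l\<in>F. g l j))"
    using insert by simp
  also have "\<dots> \<le> nm m (g x) + nm m (\<lambda>j. \<Sum>l\<in>F. g l j)" by (rule nm_add)
  also have "\<dots> \<le> nm m (g x) + (\<Sum>l\<in>F. nm m (g l))" using insert by simp
  finally show ?case using insert by simp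
qed

lemma nm_single:
  "nm (n*N) (\<lambda>j. x (j div N) * y (j mod N)) = L2_set (\<lambda>i. cmod (x i)) {..<n} * L2_set (\<lambda>a. cmod (y a)) {..<N}"
proof -
  have "(\<Sum>j<n*N. (cmod (x (j div N) * y (j mod N)))\<^sup>2) = (\<Sum>i<n. \<Sum>a<N. (cmod (x i))\<^sup>2 * (cmod (y a))\<^sup>2)"
    using sum_divmod2[where g="\<lambda>i a. (cmod (x i) * cmod (y a))\<^sup>2" and n=n and N=N]
    by (simp add: norm_mult power_mult_distrib)
  also have "\<dots> = (\<Sum>i<n. (cmod (x i))\<^sup>2) * (\<Sum>a<N. (cmod (y a))\<^sup>2)"
    by (simp add: sum_product)
  finally show ?thesis unfolding nm_def L2_set_def by (simp add: real_sqrt_mult)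
qed

lemma L2_set_prod:
  "L2_set (\<lambda>l. L2_set (\<lambda>a. g (l, a)) B) A = L2_set g (A \<times> B)"
proof (cases "finite A \<and> finite B")
  case True
  then show ?thesis unfolding L2_set_def
    by (simp add: sum_nonneg sum.cartesian_product)
next
  case False
  then show ?thesis
  proof (cases "A = {} \<or> B = {}")
    case True then show ?thesis by (auto simp: L2_set_def)
  next
    case False
    with \<open>\<not>(finite A \<and> finite B)\<close> have "infinite (A \<times> B)" by (auto simp: finite_cartesian_product_iff)
    moreover have "L2_set (\<lambda>l. L2_set (\<lambda>a. g (l, a)) B) A = 0"
      using \<open>\<not>(finite A \<and> finite B)\<close> False by (cases "finite A") (auto simp: L2_set_def)
    ultimately show ?thesis by simp
  qed
qed

lemma nm_tens:
  assumes U: "\<And>l. l < k \<Longrightarrow> L2_set (\<lambda>i. cmod (u (l,i))) {..<n} \<le> U"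
  shows "nm (n*N) (tens N k u f) \<le> U * sqrt k * L2_set (\<lambda>p. cmod (f p)) ({..<k} \<times> {..<N})"
proof -
  have U0: "k > 0 \<Longrightarrow> 0 \<le> U" using U[of 0] by (meson L2_set_nonneg order_trans)
  have "nm (n*N) (tens N k u f) \<le> (\<Sum>l<k. nm (n*N) (\<lambda>j. u (l, j div N) * f (l, j mod N)))"
    unfolding tens_def by (rule nm_sum) simp
  also have "\<dots> = (\<Sum>l<k. L2_set (\<lambda>i. cmod (u (l,i))) {..<n} * L2_set (\<lambda>a. cmod (f (l,a))) {..<N})"
    by (rule sum.cong[OF refl], rule nm_single)
  also have "\<dots> \<le> (\<Sum>l<k. U * L2_set (\<lambda>a. cmod (f (l,a))) {..<N})"
    by (intro sum_mono mult_right_mono U) auto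
  also have "\<dots> = U * (\<Sum>l<k. \<bar>1\<bar> * \<bar>L2_set (\<lambda>a. cmod (f (l,a))) {..<N}\<bar>)"
    by (simp add: sum_distrib_left)
  also have "\<dots> \<le> U * (L2_set (\<lambda>l. 1) {..<k} * L2_set (\<lambda>l. L2_set (\<lambda>a. cmod (f (l,a))) {..<N}) {..<k})"
    using L2_set_mult_ineq[of "\<lambda>l. 1" "\<lambda>l. L2_set (\<lambda>a. cmod (f (l,a))) {..<N}" "{..<k}"]
    by (cases "k = 0") (auto intro!: mult_left_mono U0)
  also have "\<dots> = U * sqrt k * L2_set (\<lambda>p. cmod (f p)) ({..<k} \<times> {..<N})"
    by (simp add: L2_set_constant L2_set_prod[of "\<lambda>p. cmod (f p)"])
  finally show ?thesis .
qed

definition orthon :: "nat \<Rightarrow> nat \<Rightarrow> (nat\<times>nat \<Rightarrow> complex) \<Rightarrow> bool" where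
  "orthon n k u \<longleftrightarrow> (\<forall>l<k. \<forall>l'<k. (\<Sum>i<n. u (l,i) * cnj (u (l',i))) = (if l = l' then 1 else 0))"

lemma nm_tens_orthon:
  assumes "orthon n k u"
  shows "nm (n*N) (tens N k u f) = L2_set (\<lambda>p. cmod (f p)) ({..<k} \<times> {..<N})"
proof -
  have "(\<Sum>j<n*N. (cmod (tens N k u f j))\<^sup>2) = (\<Sum>i<n. \<Sum>a<N. (cmod (\<Sum>l<k. u (l, i) * f (l, a)))\<^sup>2)"
    unfolding tens_def using sum_divmod2[where g="\<lambda>i a. (cmod (\<Sum>l<k. u (l, i) * f (l, a)))\<^sup>2" and n=n and N=N] by simp
  also have "complex_of_real \<dots> = (\<Sum>i<n. \<Sum>a<N. (\<Sum>l<k. u (l, i) * f (l, a)) * cnj (\<Sum>l<k. u (l, i) * f (l, a)))"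
    by (simp only: of_real_sum complex_norm_square)
  also have "\<dots> = (\<Sum>a<N. \<Sum>l<k. \<Sum>l'<k. f (l,a) * cnj (f (l',a)) * (\<Sum>i<n. u (l,i) * cnj (u (l',i))))"
    by (simp add: sum_distrib_left sum_distrib_right sum_product cnj_sum sum.swap[of _ "{..<n}"] algebra_simps)
       (rule sum.cong[OF refl], rule sum.cong[OF refl], rule sum.swap)
  also have "\<dots> = (\<Sum>a<N. \<Sum>l<k. f (l,a) * cnj (f (l,a)))"
  proof (intro sum.cong refl)
    fix a l assume l: "l \<in> {..<k}"
    have "(\<Sum>l'<k. f (l,a) * cnj (f (l',a)) * (\<Sum>i<n. u (l,i) * cnj (u (l',i))))
        = (\<Sum>l'<k. if l = l' then f (l,a) * cnj (f (l,a)) else 0)"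
      using assms l unfolding orthon_def by (intro sum.cong refl) auto
    then show "(\<Sum>l'<k. f (l,a) * cnj (f (l',a)) * (\<Sum>i<n. u (l,i) * cnj (u (l',i))))
        = f (l,a) * cnj (f (l,a))" using l by simp
  qed
  also have "\<dots> = complex_of_real (\<Sum>p\<in>{..<k} \<times> {..<N}. (cmod (f p))\<^sup>2)"
    by (simp only: of_real_sum complex_norm_square sum.cartesian_product') (rule sum.swap)
  finally have "(\<Sum>j<n*N. (cmod (tens N k u f j))\<^sup>2) = (\<Sum>p\<in>{..<k} \<times> {..<N}. (cmod (f p))\<^sup>2)"
    using of_real_eq_iff by blast
  then show ?thesis unfolding nm_def L2_set_def by simp
qed

definition rnd :: "real \<Rightarrow> complex \<Rightarrow> complex" where
  "rnd h z = complex_of_real h * Complex (of_int (round (Re z / h))) (of_int (round (Im z / h)))"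

definition grid :: "real \<Rightarrow> complex set" where
  "grid h = {complex_of_real h * Complex (of_int x) (of_int y) | x y. True}"

lemma rnd_grid: "rnd h z \<in> grid h"
  unfolding rnd_def grid_def by blast

lemma round_err: "0 < h \<Longrightarrow> (x - h * of_int (round (x / h)))\<^sup>2 \<le> h\<^sup>2 / 4"
proof -
  assume h: "0 < h"
  have "\<bar>of_int (round (x / h)) - x / h\<bar> \<le> 1/2" by (rule of_int_round_abs_le)
  moreover have "x - h * of_int (round (x / h)) = h * (x / h - of_int (round (x / h)))"
    using h by (simp add: algebra_simps)
  ultimately have "\<bar>x - h * of_int (round (x / h))\<bar> \<le> h / 2"
    using h by (simp add: abs_mult abs_minus_commute)
  then have "\<bar>x - h * of_int (round (x / h))\<bar>\<^sup>2 \<le> (h/2)\<^sup>2"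
    by (rule power_mono) simp
  then show ?thesis by (simp add: power_divide)
qed

lemma rnd_err: "0 < h \<Longrightarrow> (cmod (z - rnd h z))\<^sup>2 \<le> h\<^sup>2 / 2"
proof -
  assume h: "0 < h"
  have "(cmod (z - rnd h z))\<^sup>2 = (Re z - h * of_int (round (Re z / h)))\<^sup>2 + (Im z - h * of_int (round (Im z / h)))\<^sup>2"
    unfolding rnd_def cmod_power2 by simp
  also have "\<dots> \<le> h\<^sup>2/4 + h\<^sup>2/4" by (intro add_mono round_err h)
  finally show ?thesis by simp
qed

definition GU :: "nat \<Rightarrow> nat \<Rightarrow> real \<Rightarrow> (nat\<times>nat \<Rightarrow> complex) set" where
  "GU n k \<epsilon> = {u. \<forall>p. (p \<in> {..<k}\<times>{..<n} \<longrightarrow> u p \<in> grid (\<epsilon> / sqrt n) \<and> cmod (u p) \<le> 2)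
                   \<and> (p \<notin> {..<k}\<times>{..<n} \<longrightarrow> u p = 0)}"

definition GF :: "nat \<Rightarrow> nat \<Rightarrow> real \<Rightarrow> (nat\<times>nat \<Rightarrow> complex) set" where
  "GF N k \<epsilon> = {f. (\<forall>p. (p \<in> {..<k}\<times>{..<N} \<longrightarrow> f p \<in> grid (\<epsilon> / sqrt (k*N)))
                   \<and> (p \<notin> {..<k}\<times>{..<N} \<longrightarrow> f p = 0))
                   \<and> L2_set (\<lambda>p. cmod (f p)) ({..<k}\<times>{..<N}) \<le> 2}"

lemma L2_round_err:
  assumes "finite A" "0 < h" "real (card A) * h\<^sup>2 \<le> 2 * e\<^sup>2" "0 \<le> e"
  shows "L2_set (\<lambda>p. cmod (g p - rnd h (g p))) A \<le> e"
proof -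
  have "(\<Sum>p\<in>A. (cmod (g p - rnd h (g p)))\<^sup>2) \<le> (\<Sum>p\<in>A. h\<^sup>2/2)"
    by (intro sum_mono rnd_err assms)
  also have "\<dots> = real (card A) * h\<^sup>2 / 2" by simp
  also have "\<dots> \<le> e\<^sup>2" using assms(3) by linarith
  finally have "sqrt (\<Sum>p\<in>A. (cmod (g p - rnd h (g p)))\<^sup>2) \<le> sqrt (e\<^sup>2)"
    by (rule real_sqrt_le_mono)
  then show ?thesis unfolding L2_set_def using assms(4) by simp
qed

lemma L2_diff_le:
  "L2_set (\<lambda>p. cmod (x p)) A \<le> L2_set (\<lambda>p. cmod (y p)) A + L2_set (\<lambda>p. cmod (x p - y p)) A"
proof -
  have "L2_set (\<lambda>p. cmod (x p)) A \<le> L2_set (\<lambda>p. cmod (y p) + cmod (x p - y p)) A"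
    by (rule L2_set_mono) (metis add.commute diff_add_cancel norm_triangle_ineq, simp)
  also have "\<dots> \<le> L2_set (\<lambda>p. cmod (y p)) A + L2_set (\<lambda>p. cmod (x p - y p)) A"
    by (rule L2_set_triangle_ineq)
  finally show ?thesis .
qed

lemma L2_scale: "0 \<le> c \<Longrightarrow> L2_set (\<lambda>p. cmod (x p / complex_of_real c)) A = L2_set (\<lambda>p. cmod (x p)) A / c"
  using L2_set_right_distrib[of "1/c" "\<lambda>p. cmod (x p)" A]
  by (simp add: norm_divide)

lemma Lb_zero: "Lb b d m (\<lambda>j. 0) = 0"
  unfolding Lb_def L2_set_def by simp

lemma Lb_nonneg: "0 \<le> Lb b d m y"
  unfolding Lb_def by simp

lemma nm_neg: "nm m (\<lambda>j. - y j) = nm m y"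
  unfolding nm_def by simp

lemma step_star:
  fixes b :: "nat \<Rightarrow> nat \<Rightarrow> complex" and S :: real
  assumes eps: "0 < \<epsilon>" "\<epsilon> \<le> 1/6" and a: "0 \<le> a" and nN: "n > 0" "N > 0" "k > 0"
    and net: "\<And>u f. u \<in> GU n k \<epsilon> \<Longrightarrow> f \<in> GF N k \<epsilon> \<Longrightarrow>
                 Lb b d (n*N) (tens N k u f) \<le> sqrt a * nm (n*N) (tens N k u f)"
    and Sup: "\<And>u f. (\<forall>l<k. L2_set (\<lambda>i. cmod (u (l,i))) {..<n} \<le> 1) \<Longrightarrow>
                 L2_set (\<lambda>p. cmod (f p)) ({..<k}\<times>{..<N}) \<le> 1 \<Longrightarrow> Lb b d (n*N) (tens N k u f) \<le> S"
    and u: "\<forall>l<k. L2_set (\<lambda>i. cmod (u (l,i))) {..<n} \<le> 1"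
    and f: "L2_set (\<lambda>p. cmod (f p)) ({..<k}\<times>{..<N}) \<le> 1"
  shows "Lb b d (n*N) (tens N k u f) \<le> sqrt a * (nm (n*N) (tens N k u f) + 3 * sqrt k * \<epsilon>) + 3 * \<epsilon> * S"
proof -
  define m where "m = n*N"
  define I where "I = {..<k}\<times>{..<N}"
  define h where "h = \<epsilon> / sqrt n"
  define \<delta> where "\<delta> = \<epsilon> / sqrt (k*N)"
  have h0: "0 < h" unfolding h_def using eps nN by simp
  have d0: "0 < \<delta>" unfolding \<delta>_def using eps nN by simp
  define u' where "u' = (\<lambda>p. if p \<in> {..<k}\<times>{..<n} then rnd h (u p) else 0)"
  define f' where "f' = (\<lambda>p. if p \<in> I then rnd \<delta> (f p) else 0)"
  define du where "du = (\<lambda>p. u p - u' p)"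
  define df where "df = (\<lambda>p. f p - f' p)"
  have S0: "0 \<le> S"
    using Sup[of "\<lambda>_. 0" "\<lambda>_. 0"] by (simp add: L2_set_def Lb_nonneg order_trans[OF Lb_nonneg])
  have du_small: "L2_set (\<lambda>i. cmod (du (l,i))) {..<n} \<le> \<epsilon>" if l: "l < k" for l
  proof -
    have "L2_set (\<lambda>i. cmod (du (l,i))) {..<n} = L2_set (\<lambda>i. cmod (u (l,i) - rnd h (u (l,i)))) {..<n}"
      using l by (intro L2_set_cong) (auto simp: du_def u'_def)
    also have "\<dots> \<le> \<epsilon>"
      by (rule L2_round_err) (use eps nN h0 in \<open>auto simp: h_def power_divide\<close>)
    finally show ?thesis .
  qed
  have df_small: "L2_set (\<lambda>p. cmod (df p)) I \<le> \<epsilon>"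
  proof -
    have "L2_set (\<lambda>p. cmod (df p)) I = L2_set (\<lambda>p. cmod (f p - rnd \<delta> (f p))) I"
      by (intro L2_set_cong) (auto simp: df_def f'_def)
    also have "\<dots> \<le> \<epsilon>"
      by (rule L2_round_err) (use eps nN d0 in \<open>auto simp: \<delta>_def I_def power_divide\<close>)
    finally show ?thesis .
  qed
  have u'_small: "L2_set (\<lambda>i. cmod (u' (l,i))) {..<n} \<le> 2" if l: "l < k" for l
  proof -
    have "L2_set (\<lambda>i. cmod (u' (l,i))) {..<n} \<le> L2_set (\<lambda>i. cmod (u (l,i))) {..<n} + L2_set (\<lambda>i. cmod (u' (l,i) - u (l,i))) {..<n}"
      by (rule L2_diff_le)
    also have "L2_set (\<lambda>i. cmod (u' (l,i) - u (l,i))) {..<n} = L2_set (\<lambda>i. cmod (du (l,i))) {..<n}"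
      unfolding du_def by (simp add: norm_minus_commute)
    finally show ?thesis using du_small[OF l] u[rule_format, OF l] eps by linarith
  qed
  have f'_small: "L2_set (\<lambda>p. cmod (f' p)) I \<le> 2"
  proof -
    have "L2_set (\<lambda>p. cmod (f' p)) I \<le> L2_set (\<lambda>p. cmod (f p)) I + L2_set (\<lambda>p. cmod (f' p - f p)) I"
      by (rule L2_diff_le)
    also have "L2_set (\<lambda>p. cmod (f' p - f p)) I = L2_set (\<lambda>p. cmod (df p)) I"
      unfolding df_def by (simp add: norm_minus_commute)
    finally show ?thesis using df_small f eps unfolding I_def by linarith
  qed
  have u'GU: "u' \<in> GU n k \<epsilon>"
    unfolding GU_def
  proof (intro CollectI allI conjI impI)
    fix p :: "nat \<times> nat" assume p: "p \<in> {..<k}\<times>{..<n}"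
    then show "u' p \<in> grid (\<epsilon> / sqrt n)" by (simp add: u'_def h_def rnd_grid)
    obtain l i where p': "p = (l,i)" "l < k" "i < n" using p by auto
    have "cmod (u' p) \<le> cmod (u p) + cmod (du p)"
      unfolding du_def by (metis norm_minus_commute norm_triangle_sub)
    also have "cmod (u p) \<le> 1"
      using member_le_L2_set[of "{..<n}" i "\<lambda>i. cmod (u (l,i))"] u p' by auto
    also have "cmod (du p) \<le> \<epsilon>"
      using member_le_L2_set[of "{..<n}" i "\<lambda>i. cmod (du (l,i))"] du_small[of l] p' by auto
    finally show "cmod (u' p) \<le> 2" using eps by linarith
  next
    fix p :: "nat \<times> nat" assume "p \<notin> {..<k}\<times>{..<n}"
    then show "u' p = 0" by (simp add: u'_def)
  qed
  have f'GF: "f' \<in> GF N k \<epsilon>"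
    unfolding GF_def using f'_small
    by (auto simp: f'_def I_def \<delta>_def rnd_grid)
  have tsplit: "tens N k u f j = tens N k u' f' j + tens N k du f j + tens N k u' df j" for j
    unfolding du_def df_def by (rule tens_split)
  have Lsplit: "Lb b d m (tens N k u f) \<le> Lb b d m (tens N k u' f') + Lb b d m (tens N k du f) + Lb b d m (tens N k u' df)"
  proof -
    have "Lb b d m (tens N k u f) = Lb b d m (\<lambda>j. (tens N k u' f' j + tens N k du f j) + tens N k u' df j)"
      by (rule arg_cong[where f="Lb b d m"], rule ext, rule tsplit)
    also have "\<dots> \<le> Lb b d m (\<lambda>j. tens N k u' f' j + tens N k du f j) + Lb b d m (tens N k u' df)"
      by (rule Lb_add)
    also have "Lb b d m (\<lambda>j. tens N k u' f' j + tens N k du f j) \<le> Lb b d m (tens N k u' f') + Lb b d m (tens N k du f)"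
      by (rule Lb_add)
    finally show ?thesis by simp
  qed
  define du1 where "du1 = (\<lambda>p. du p / complex_of_real \<epsilon>)"
  have du1: "\<forall>l<k. L2_set (\<lambda>i. cmod (du1 (l,i))) {..<n} \<le> 1"
    using du_small eps unfolding du1_def by (simp add: L2_scale)
  have t1: "tens N k du f = (\<lambda>j. complex_of_real \<epsilon> * tens N k du1 f j)"
    using eps by (simp add: du1_def tens_scale_u[symmetric])
  have L1: "Lb b d m (tens N k du f) \<le> \<epsilon> * S"
  proof -
    have "Lb b d m (tens N k du f) = \<epsilon> * Lb b d m (tens N k du1 f)"
      using eps by (simp add: t1 Lb_scale)
    also have "\<dots> \<le> \<epsilon> * S" using Sup[OF du1 f] eps m_def by simp
    finally show ?thesis .
  qed
  define u2 where "u2 = (\<lambda>p. u' p / 2)"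
  define df2 where "df2 = (\<lambda>p. df p / complex_of_real \<epsilon>)"
  have u2: "\<forall>l<k. L2_set (\<lambda>i. cmod (u2 (l,i))) {..<n} \<le> 1"
  proof (intro allI impI)
    fix l assume "l < k"
    then show "L2_set (\<lambda>i. cmod (u2 (l,i))) {..<n} \<le> 1"
      using u'_small[of l] L2_scale[of 2 "\<lambda>i. u' (l, i)" "{..<n}"] unfolding u2_def by simp
  qed
  have df2: "L2_set (\<lambda>p. cmod (df2 p)) ({..<k}\<times>{..<N}) \<le> 1"
    using df_small eps L2_scale[of \<epsilon> df I] unfolding df2_def I_def by simp
  have t2: "tens N k u' df = (\<lambda>j. complex_of_real (2*\<epsilon>) * tens N k u2 df2 j)"
    using eps by (intro ext) (simp add: tens_def u2_def df2_def sum_distrib_left field_simps)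
  have L2: "Lb b d m (tens N k u' df) \<le> 2 * \<epsilon> * S"
  proof -
    have "Lb b d m (tens N k u' df) = 2 * \<epsilon> * Lb b d m (tens N k u2 df2)"
      using eps by (simp add: t2 Lb_scale)
    also have "\<dots> \<le> 2 * \<epsilon> * S" using Sup[OF u2 df2] eps m_def by simp
    finally show ?thesis .
  qed
  have N1: "nm m (tens N k du f) \<le> \<epsilon> * sqrt k"
  proof -
    have "nm m (tens N k du f) \<le> \<epsilon> * sqrt k * L2_set (\<lambda>p. cmod (f p)) ({..<k}\<times>{..<N})"
      unfolding m_def by (rule nm_tens) (rule du_small)
    also have "\<dots> \<le> \<epsilon> * sqrt k" using f eps by (simp add: mult_left_le)
    finally show ?thesis .
  qed
  have N2: "nm m (tens N k u' df) \<le> 2 * sqrt k * \<epsilon>"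
  proof -
    have "nm m (tens N k u' df) \<le> 2 * sqrt k * L2_set (\<lambda>p. cmod (df p)) ({..<k}\<times>{..<N})"
      unfolding m_def by (rule nm_tens) (rule u'_small)
    also have "\<dots> \<le> 2 * sqrt k * \<epsilon>" using df_small unfolding I_def by (simp add: mult_left_mono)
    finally show ?thesis .
  qed
  have N0: "nm m (tens N k u' f') \<le> nm m (tens N k u f) + \<epsilon> * sqrt k + 2 * sqrt k * \<epsilon>"
  proof -
    have "tens N k u' f' = (\<lambda>j. (tens N k u f j + - tens N k du f j) + - tens N k u' df j)"
      using tsplit by (auto simp: algebra_simps)
    then have "nm m (tens N k u' f') \<le> nm m (\<lambda>j. tens N k u f j + - tens N k du f j) + nm m (\<lambda>j. - tens N k u' df j)"
      using nm_add by metis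
    also have "\<dots> \<le> nm m (tens N k u f) + nm m (tens N k du f) + nm m (tens N k u' df)"
      using nm_add[of m "tens N k u f" "\<lambda>j. - tens N k du f j"] by (simp add: nm_neg)
    finally show ?thesis using N1 N2 by linarith
  qed
  have L0: "Lb b d m (tens N k u' f') \<le> sqrt a * (nm m (tens N k u f) + 3 * sqrt k * \<epsilon>)"
  proof -
    have "Lb b d m (tens N k u' f') \<le> sqrt a * nm m (tens N k u' f')"
      using net[OF u'GU f'GF] m_def by simp
    also have "\<dots> \<le> sqrt a * (nm m (tens N k u f) + 3 * sqrt k * \<epsilon>)"
      using N0 a by (intro mult_left_mono) (auto simp: algebra_simps)
    finally show ?thesis .
  qed
  show ?thesis using Lsplit L0 L1 L2 unfolding m_def by (simp add: algebra_simps)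
qed

lemma orthon_L2: "orthon n k u \<Longrightarrow> l < k \<Longrightarrow> L2_set (\<lambda>i. cmod (u (l,i))) {..<n} = 1"
proof -
  assume o: "orthon n k u" and l: "l < k"
  have "complex_of_real (\<Sum>i<n. (cmod (u (l,i)))\<^sup>2) = (\<Sum>i<n. u (l,i) * cnj (u (l,i)))"
    by (simp only: of_real_sum complex_norm_square)
  also have "\<dots> = 1" using o l unfolding orthon_def by auto
  finally have "(\<Sum>i<n. (cmod (u (l,i)))\<^sup>2) = 1"
    by (metis of_real_eq_1_iff)
  then show ?thesis unfolding L2_set_def by simp
qed

lemma det_main:
  fixes b :: "nat \<Rightarrow> nat \<Rightarrow> complex"
  assumes eps: "0 < \<epsilon>" "\<epsilon> \<le> 1/6" and a: "0 \<le> a" and ac: "sqrt a * (1 + 12 * \<epsilon> * sqrt k) \<le> sqrt c"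
    and nN: "n > 0" "N > 0" "k > 0"
    and net: "\<And>u f. u \<in> GU n k \<epsilon> \<Longrightarrow> f \<in> GF N k \<epsilon> \<Longrightarrow>
                 Lb b d (n*N) (tens N k u f) \<le> sqrt a * nm (n*N) (tens N k u f)"
    and o: "orthon n k u"
  shows "Lb b d (n*N) (tens N k u f) \<le> sqrt c * nm (n*N) (tens N k u f)"
proof -
  define I where "I = {..<k}\<times>{..<N}"
  define SS where "SS = {Lb b d (n*N) (tens N k u f) | u f. (\<forall>l<k. L2_set (\<lambda>i. cmod (u (l,i))) {..<n} \<le> 1)
                          \<and> L2_set (\<lambda>p. cmod (f p)) I \<le> 1}"
  define S where "S = Sup SS"
  define K where "K = L2_set (\<lambda>i. L2_set (\<lambda>j. cmod (b i j)) {..<n*N}) {..<d}"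
  have nmb: "nm (n*N) (tens N k u f) \<le> sqrt k"
    if "\<forall>l<k. L2_set (\<lambda>i. cmod (u (l,i))) {..<n} \<le> 1" "L2_set (\<lambda>p. cmod (f p)) I \<le> 1" for u f
  proof -
    have "nm (n*N) (tens N k u f) \<le> 1 * sqrt k * L2_set (\<lambda>p. cmod (f p)) I"
      unfolding I_def by (rule nm_tens) (use that in auto)
    also have "\<dots> \<le> sqrt k" using that by (simp add: mult_left_le)
    finally show ?thesis .
  qed
  have bdd: "bdd_above SS"
  proof (rule bdd_aboveI)
    fix x assume "x \<in> SS"
    then obtain u f where x: "x = Lb b d (n*N) (tens N k u f)"
      and uf: "\<forall>l<k. L2_set (\<lambda>i. cmod (u (l,i))) {..<n} \<le> 1" "L2_set (\<lambda>p. cmod (f p)) I \<le> 1"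
      unfolding SS_def by blast
    have "x \<le> K * nm (n*N) (tens N k u f)" unfolding x K_def by (rule Lb_bound)
    also have "\<dots> \<le> K * sqrt k" using nmb[OF uf] by (intro mult_left_mono) (auto simp: K_def)
    finally show "x \<le> K * sqrt k" .
  qed
  have ne: "SS \<noteq> {}" unfolding SS_def I_def by (auto simp: L2_set_def intro!: exI[of _ "\<lambda>_. 0"])
  have memS: "\<And>u f. (\<forall>l<k. L2_set (\<lambda>i. cmod (u (l,i))) {..<n} \<le> 1) \<Longrightarrow>
                 L2_set (\<lambda>p. cmod (f p)) ({..<k}\<times>{..<N}) \<le> 1 \<Longrightarrow> Lb b d (n*N) (tens N k u f) \<le> S"
    unfolding S_def by (rule cSup_upper[OF _ bdd]) (auto simp: SS_def I_def)
  have S0: "0 \<le> S"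
    using memS[of "\<lambda>_. 0" "\<lambda>_. 0"] by (simp add: L2_set_def order_trans[OF Lb_nonneg])
  define A where "A = sqrt a * sqrt k"
  have A0: "0 \<le> A" unfolding A_def using a by simp
  have "S \<le> A * (1 + 3*\<epsilon>) + 3 * \<epsilon> * S"
    unfolding S_def
  proof (rule cSup_least[OF ne])
    fix x assume "x \<in> SS"
    then obtain u f where x: "x = Lb b d (n*N) (tens N k u f)"
      and uf: "\<forall>l<k. L2_set (\<lambda>i. cmod (u (l,i))) {..<n} \<le> 1" "L2_set (\<lambda>p. cmod (f p)) I \<le> 1"
      unfolding SS_def by blast
    have "x \<le> sqrt a * (nm (n*N) (tens N k u f) + 3 * sqrt k * \<epsilon>) + 3 * \<epsilon> * S"
      unfolding x by (rule step_star[OF eps a nN net memS]) (use uf in \<open>auto simp: I_def\<close>)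
    also have "\<dots> \<le> sqrt a * (sqrt k + 3 * sqrt k * \<epsilon>) + 3 * \<epsilon> * S"
      using nmb[OF uf] a by (intro add_right_mono mult_left_mono) auto
    finally show "x \<le> A * (1 + 3*\<epsilon>) + 3 * \<epsilon> * Sup SS"
      by (simp add: A_def S_def algebra_simps)
  qed
  moreover have "3 * \<epsilon> * S \<le> S / 2"
  proof -
    have "(3 * \<epsilon>) * S \<le> (1/2) * S" using S0 eps by (intro mult_right_mono) auto
    then show ?thesis by simp
  qed
  moreover have "A * (3 * \<epsilon>) \<le> A / 2"
  proof -
    have "A * (3 * \<epsilon>) \<le> A * (1/2)" using A0 eps by (intro mult_left_mono) auto
    then show ?thesis by simp
  qed
  ultimately have Sb: "S \<le> 3 * A" by (simp add: algebra_simps)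
  define F where "F = L2_set (\<lambda>p. cmod (f p)) I"
  show ?thesis
  proof (cases "F = 0")
    case True
    then have f0: "\<forall>p\<in>I. f p = 0" unfolding F_def I_def by (simp add: L2_set_eq_0_iff)
    have "Lb b d (n*N) (tens N k u f) = Lb b d (n*N) (\<lambda>j. 0)"
    proof (rule Lb_cong)
      fix j assume "j < n*N"
      then have "j mod N < N" using nN by simp
      then show "tens N k u f j = 0" unfolding tens_def using f0 by (auto simp: I_def)
    qed
    moreover have "0 \<le> sqrt c"
    proof -
      have "0 \<le> sqrt a * (1 + 12 * \<epsilon> * sqrt k)" using eps a by (intro mult_nonneg_nonneg) auto
      then show ?thesis using ac by linarith
    qed
    ultimately show ?thesis by (simp add: Lb_zero nm_def)
  next
    case False
    then have F0: "0 < F" unfolding F_def by (simp add: less_le)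
    define f1 where "f1 = (\<lambda>p. f p / complex_of_real F)"
    have f1: "L2_set (\<lambda>p. cmod (f1 p)) ({..<k}\<times>{..<N}) = 1" unfolding f1_def using F0 L2_scale[of F f I] by (simp add: F_def I_def)
    have u1: "\<forall>l<k. L2_set (\<lambda>i. cmod (u (l,i))) {..<n} \<le> 1" using orthon_L2[OF o] by simp
    have nm1: "nm (n*N) (tens N k u f1) = 1" using nm_tens_orthon[OF o] f1 by simp
    have "Lb b d (n*N) (tens N k u f1) \<le> sqrt a * (nm (n*N) (tens N k u f1) + 3 * sqrt k * \<epsilon>) + 3 * \<epsilon> * S"
      by (rule step_star[OF eps a nN net memS u1 eq_refl[OF f1]])
    also have "\<dots> \<le> sqrt a * (1 + 3 * sqrt k * \<epsilon>) + 3 * \<epsilon> * (3 * A)"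
      using Sb eps by (simp add: nm1)
    also have "\<dots> = sqrt a * (1 + 12 * \<epsilon> * sqrt k)" by (simp add: A_def algebra_simps)
    also have "\<dots> \<le> sqrt c" by (rule ac)
    finally have L1: "Lb b d (n*N) (tens N k u f1) \<le> sqrt c" .
    have tf: "tens N k u f = (\<lambda>j. complex_of_real F * tens N k u f1 j)"
      using F0 by (simp add: f1_def tens_scale_f[symmetric])
    have "Lb b d (n*N) (tens N k u f) = F * Lb b d (n*N) (tens N k u f1)"
      using F0 by (simp add: tf Lb_scale)
    also have "\<dots> \<le> F * sqrt c" using L1 F0 by simp
    also have "F = nm (n*N) (tens N k u f)" using nm_tens_orthon[OF o] by (simp add: F_def I_def)
    finally show ?thesis by (simp add: mult.commute)
  qed
qed



lemma grid_coords:
  assumes "0 < h" "z = complex_of_real h * Complex (of_int x) (of_int y)"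
  shows "round (Re z / h) = x" "round (Im z / h) = y"
  using assms by simp_all

lemma grid_bound:
  assumes "0 < h" "z = complex_of_real h * Complex (of_int x) (of_int y)" "cmod z \<le> 2"
  shows "\<bar>x\<bar> \<le> ceiling (2/h)" "\<bar>y\<bar> \<le> ceiling (2/h)"
proof -
  have "\<bar>Re z\<bar> \<le> 2" "\<bar>Im z\<bar> \<le> 2" using assms(3) abs_Re_le_cmod abs_Im_le_cmod order_trans by blast+
  then have "h * \<bar>of_int x\<bar> \<le> 2" "h * \<bar>of_int y\<bar> \<le> 2" using assms(1,2) by (simp_all add: abs_mult)
  then have "\<bar>of_int x\<bar> \<le> 2/h" "\<bar>of_int y\<bar> \<le> 2/h" using assms(1) by (simp_all add: field_simps)
  then show "\<bar>x\<bar> \<le> ceiling (2/h)" "\<bar>y\<bar> \<le> ceiling (2/h)"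
    by (metis of_int_abs of_int_le_iff le_of_int_ceiling order_trans)+
qed

lemma exp_sq_le: "exp (- (real_of_int x)\<^sup>2) \<le> (1/2) ^ nat \<bar>x\<bar>"
proof -
  have "(real_of_int \<bar>x\<bar>) \<le> (real_of_int x)\<^sup>2"
  proof (cases "x = 0")
    case False
    then have "1 \<le> \<bar>x\<bar>" by simp
    then have "\<bar>x\<bar> * 1 \<le> \<bar>x\<bar> * \<bar>x\<bar>" by (intro mult_left_mono) auto
    then show ?thesis by (simp add: power2_eq_square flip: of_int_mult)
  qed simp
  then have "exp (- (real_of_int x)\<^sup>2) \<le> exp (- real_of_int \<bar>x\<bar>)" by simp
  also have "exp (- real_of_int \<bar>x\<bar>) = (exp (-1)) ^ nat \<bar>x\<bar>"
    by (simp add: exp_of_nat_mult[symmetric])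
  also have "\<dots> \<le> (1/2) ^ nat \<bar>x\<bar>"
  proof (rule power_mono)
    have "2 \<le> exp (1::real)" using exp_ge_add_one_self[of 1] by simp
    then show "exp (-1) \<le> (1/2::real)" by (simp add: exp_minus field_simps)
  qed simp
  finally show ?thesis .
qed

lemma sum_half_int: "(\<Sum>x\<in>{-T..T}. (1/2::real) ^ nat \<bar>x\<bar>) \<le> 4"
proof -
  define M where "M = nat T"
  define A where "A = (\<lambda>j. int j) ` {..<Suc M}"
  define B where "B = (\<lambda>j. - int j) ` {..<Suc M}"
  have sub: "{-T..T} \<subseteq> A \<union> B"
  proof
    fix x assume x: "x \<in> {-T..T}"
    show "x \<in> A \<union> B"
    proof (cases "0 \<le> x")
      case True then have "x = int (nat x)" "nat x < Suc M" using x by (auto simp: M_def)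
      then show ?thesis unfolding A_def by blast
    next
      case False then have "x = - int (nat (-x))" "nat (-x) < Suc M" using x by (auto simp: M_def)
      then show ?thesis unfolding B_def by blast
    qed
  qed
  have fin: "finite A" "finite B" unfolding A_def B_def by auto
  have "(\<Sum>x\<in>{-T..T}. (1/2::real) ^ nat \<bar>x\<bar>) \<le> (\<Sum>x\<in>A \<union> B. (1/2::real) ^ nat \<bar>x\<bar>)"
    by (rule sum_mono2) (use fin sub in auto)
  also have "\<dots> \<le> (\<Sum>x\<in>A. (1/2::real) ^ nat \<bar>x\<bar>) + (\<Sum>x\<in>B. (1/2::real) ^ nat \<bar>x\<bar>)"
    using sum.union_inter[OF fin, of "\<lambda>x. (1/2::real) ^ nat \<bar>x\<bar>"]
      sum_nonneg[of "A \<inter> B" "\<lambda>x. (1/2::real) ^ nat \<bar>x\<bar>"] by simp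
  also have "(\<Sum>x\<in>A. (1/2::real) ^ nat \<bar>x\<bar>) = (\<Sum>j<Suc M. (1/2::real) ^ j)"
    unfolding A_def by (subst sum.reindex) (auto simp: inj_on_def)
  also have "(\<Sum>x\<in>B. (1/2::real) ^ nat \<bar>x\<bar>) = (\<Sum>j<Suc M. (1/2::real) ^ j)"
    unfolding B_def by (subst sum.reindex) (auto simp: inj_on_def)
  also have "(\<Sum>j<Suc M. (1/2::real) ^ j) \<le> 2"
    by (simp add: sum_gp_strict)
  finally show ?thesis by simp
qed

lemma box_sum: "(\<Sum>w\<in>{-T..T}\<times>{-T..T}. exp (- ((real_of_int (fst w))\<^sup>2 + (real_of_int (snd w))\<^sup>2))) \<le> 16"
proof -
  have "(\<Sum>w\<in>{-T..T}\<times>{-T..T}. exp (- ((real_of_int (fst w))\<^sup>2 + (real_of_int (snd w))\<^sup>2)))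
      = (\<Sum>x\<in>{-T..T}. exp (- (real_of_int x)\<^sup>2)) * (\<Sum>y\<in>{-T..T}. exp (- (real_of_int y)\<^sup>2))"
    by (simp add: sum_product sum.cartesian_product' exp_add[symmetric])
  also have "\<dots> \<le> 4 * 4"
  proof -
    have "(\<Sum>x\<in>{-T..T}. exp (- (real_of_int x)\<^sup>2)) \<le> 4"
      using sum_mono[of "{-T..T}" "\<lambda>x. exp (- (real_of_int x)\<^sup>2)" "\<lambda>x. (1/2::real) ^ nat \<bar>x\<bar>"]
        exp_sq_le sum_half_int[of T] by (meson order_trans)
    then show ?thesis by (intro mult_mono) (auto intro: sum_nonneg)
  qed
  finally show ?thesis by simp
qed

lemma card_GF:
  assumes eps: "0 < \<epsilon>" and nN: "N > 0" "k > 0"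
  shows "finite (GF N k \<epsilon>) \<and> real (card (GF N k \<epsilon>)) \<le> exp (4 * real (k*N) / \<epsilon>\<^sup>2) * 16 ^ (k*N)"
proof -
  define \<delta> where "\<delta> = \<epsilon> / sqrt (k*N)"
  have d0: "0 < \<delta>" unfolding \<delta>_def using eps nN by simp
  define I where "I = {..<k}\<times>{..<N}"
  define T where "T = ceiling (2/\<delta>)"
  define Box where "Box = {-T..T}\<times>{-T..T}"
  define \<phi> where "\<phi> f = restrict (\<lambda>p. (round (Re (f p)/\<delta>), round (Im (f p)/\<delta>))) I" for f :: "nat\<times>nat \<Rightarrow> complex"
  define nz where "nz w = (real_of_int (fst w))\<^sup>2 + (real_of_int (snd w))\<^sup>2" for w :: "int\<times>int"
  define Zs where "Zs = {z \<in> PiE I (\<lambda>_. Box). (\<Sum>p\<in>I. nz (z p)) \<le> 4/\<delta>\<^sup>2}"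
  have finI: "finite I" "card I = k*N" unfolding I_def by (auto simp: card_cartesian_product)
  have finB: "finite Box" unfolding Box_def by auto
  have finZ: "finite Zs" unfolding Zs_def
    by (rule finite_subset[of _ "PiE I (\<lambda>_. Box)"]) (use finI finB in \<open>auto intro: finite_PiE\<close>)
  have gridrep: "\<exists>x y. f p = complex_of_real \<delta> * Complex (of_int x) (of_int y)" if "f \<in> GF N k \<epsilon>" "p \<in> I" for f p
    using that unfolding GF_def grid_def I_def \<delta>_def by auto
  have img: "\<phi> ` GF N k \<epsilon> \<subseteq> Zs"
  proof
    fix z assume "z \<in> \<phi> ` GF N k \<epsilon>"
    then obtain f where f: "f \<in> GF N k \<epsilon>" and z: "z = \<phi> f" by blast
    have L2f: "L2_set (\<lambda>p. cmod (f p)) I \<le> 2" using f unfolding GF_def I_def by auto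
    have nzp: "nz (z p) = (cmod (f p))\<^sup>2 / \<delta>\<^sup>2" and boxp: "z p \<in> Box" if p: "p \<in> I" for p
    proof -
      obtain x y where xy: "f p = complex_of_real \<delta> * Complex (of_int x) (of_int y)" using gridrep[OF f p] by blast
      have zp: "z p = (x, y)" using p d0 xy by (simp add: z \<phi>_def)
      show "nz (z p) = (cmod (f p))\<^sup>2 / \<delta>\<^sup>2" using d0
        by (simp add: zp nz_def xy cmod_power2 power_mult_distrib field_simps)
      have "cmod (f p) \<le> 2" using member_le_L2_set[OF finI(1) p, of "\<lambda>p. cmod (f p)"] L2f by simp
      then show "z p \<in> Box" using grid_bound[OF d0 xy] by (simp add: Box_def T_def zp abs_le_iff)
    qed
    have "(\<Sum>p\<in>I. nz (z p)) = (\<Sum>p\<in>I. (cmod (f p))\<^sup>2) / \<delta>\<^sup>2"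
      by (simp add: nzp sum_divide_distrib)
    also have "(\<Sum>p\<in>I. (cmod (f p))\<^sup>2) \<le> 4"
    proof -
      have "sqrt (\<Sum>p\<in>I. (cmod (f p))\<^sup>2) \<le> sqrt 4" using L2f by (simp add: L2_set_def)
      then show ?thesis using real_sqrt_le_iff by blast
    qed
    then have "(\<Sum>p\<in>I. (cmod (f p))\<^sup>2) / \<delta>\<^sup>2 \<le> 4 / \<delta>\<^sup>2" using d0 by (simp add: divide_right_mono)
    finally show "z \<in> Zs" unfolding Zs_def using boxp by (auto simp: z \<phi>_def)
  qed
  have inj: "inj_on \<phi> (GF N k \<epsilon>)"
  proof (rule inj_onI)
    fix f g assume f: "f \<in> GF N k \<epsilon>" and g: "g \<in> GF N k \<epsilon>" and eq: "\<phi> f = \<phi> g"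
    show "f = g"
    proof
      fix p show "f p = g p"
      proof (cases "p \<in> I")
        case True
        obtain x y where xy: "f p = complex_of_real \<delta> * Complex (of_int x) (of_int y)" using gridrep[OF f True] by blast
        obtain x' y' where xy': "g p = complex_of_real \<delta> * Complex (of_int x') (of_int y')" using gridrep[OF g True] by blast
        have "\<phi> f p = \<phi> g p" using eq by simp
        then have "x = x'" "y = y'" using True d0 xy xy' by (simp_all add: \<phi>_def)
        then show ?thesis using xy xy' by simp
      next
        case False then show ?thesis using f g unfolding GF_def I_def by (cases p) auto
      qed
    qed
  qed
  have finGF: "finite (GF N k \<epsilon>)" using inj img finZ by (meson finite_imageD finite_subset)
  have "real (card (GF N k \<epsilon>)) = real (card (\<phi> ` GF N k \<epsilon>))" using inj by (simp add: card_image)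
  also have "\<dots> \<le> real (card Zs)" using card_mono[OF finZ img] by simp
  also have "\<dots> = (\<Sum>z\<in>Zs. 1)" by simp
  also have "\<dots> \<le> (\<Sum>z\<in>Zs. exp (4/\<delta>\<^sup>2) * (\<Prod>p\<in>I. exp (- nz (z p))))"
  proof (rule sum_mono)
    fix z assume z: "z \<in> Zs"
    have "exp (4/\<delta>\<^sup>2) * (\<Prod>p\<in>I. exp (- nz (z p))) = exp (4/\<delta>\<^sup>2 - (\<Sum>p\<in>I. nz (z p)))"
    proof -
      have "(\<Prod>p\<in>I. exp (- nz (z p))) = exp (- (\<Sum>p\<in>I. nz (z p)))"
        using exp_sum[OF finI(1), of "\<lambda>p. - nz (z p)"] by (simp add: sum_negf)
      then show ?thesis by (simp add: mult_exp_exp)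
    qed
    also have "\<dots> \<ge> 1" using z unfolding Zs_def by simp
    finally show "1 \<le> exp (4/\<delta>\<^sup>2) * (\<Prod>p\<in>I. exp (- nz (z p)))" .
  qed
  also have "\<dots> \<le> (\<Sum>z\<in>PiE I (\<lambda>_. Box). exp (4/\<delta>\<^sup>2) * (\<Prod>p\<in>I. exp (- nz (z p))))"
  proof (rule sum_mono2)
    show "finite (PiE I (\<lambda>_. Box))" using finI finB by (auto intro!: finite_PiE)
    show "Zs \<subseteq> PiE I (\<lambda>_. Box)" unfolding Zs_def by auto
    fix z show "0 \<le> exp (4/\<delta>\<^sup>2) * (\<Prod>p\<in>I. exp (- nz (z p)))"
      by (intro mult_nonneg_nonneg prod_nonneg) auto
  qed
  also have "\<dots> = exp (4/\<delta>\<^sup>2) * (\<Prod>p\<in>I. \<Sum>w\<in>Box. exp (- nz w))"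
    by (simp only: prod_sum_PiE[OF finI(1) finB] sum_distrib_left)
  also have "\<dots> \<le> exp (4/\<delta>\<^sup>2) * (\<Prod>p\<in>I. 16)"
    using box_sum[of T]
    by (intro mult_left_mono prod_mono) (auto simp: Box_def nz_def intro: sum_nonneg)
  also have "\<dots> = exp (4 * real (k*N) / \<epsilon>\<^sup>2) * 16 ^ (k*N)"
    using finI nN eps by (simp add: \<delta>_def power_divide)
  finally show ?thesis using finGF by simp
qed

lemma finite_GU:
  assumes "0 < \<epsilon>" "n > 0"
  shows "finite (GU n k \<epsilon>)"
proof -
  define h where "h = \<epsilon> / sqrt n"
  have h0: "0 < h" unfolding h_def using assms by simp
  define T where "T = ceiling (2/h)"
  define V where "V = (\<lambda>(x,y). complex_of_real h * Complex (of_int x) (of_int y)) ` ({-T..T}\<times>{-T..T})"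
  have "GU n k \<epsilon> \<subseteq> {u. \<forall>p. (p \<in> {..<k}\<times>{..<n} \<longrightarrow> u p \<in> V) \<and> (p \<notin> {..<k}\<times>{..<n} \<longrightarrow> u p = 0)}"
  proof (rule subsetI, rule CollectI, intro allI conjI impI)
    fix u p assume u: "u \<in> GU n k \<epsilon>" and p: "p \<in> {..<k}\<times>{..<n}"
    then have "u p \<in> grid h" "cmod (u p) \<le> 2" unfolding GU_def h_def by auto
    then obtain x y where xy: "u p = complex_of_real h * Complex (of_int x) (of_int y)" unfolding grid_def by blast
    have "\<bar>x\<bar> \<le> T" "\<bar>y\<bar> \<le> T" using grid_bound[OF h0 xy] \<open>cmod (u p) \<le> 2\<close> by (auto simp: T_def)
    then show "u p \<in> V" unfolding V_def using xy by (auto simp: abs_le_iff intro!: image_eqI[of _ _ "(x,y)"])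
  next
    fix u p assume "u \<in> GU n k \<epsilon>" "p \<notin> {..<k}\<times>{..<n}"
    then show "u p = 0" unfolding GU_def by (cases p) auto
  qed
  moreover have "finite {u. \<forall>p. (p \<in> {..<k}\<times>{..<n} \<longrightarrow> u p \<in> V) \<and> (p \<notin> {..<k}\<times>{..<n} \<longrightarrow> u p = 0)}"
    by (rule finite_set_of_finite_funs) (auto simp: V_def)
  ultimately show ?thesis by (rule finite_subset)
qed



lemma normal_mgf_sq_density:
  fixes \<sigma> u :: real
  assumes "0 < \<sigma>" "0 \<le> u" "2 * u * \<sigma>\<^sup>2 < 1"
  shows "normal_density 0 \<sigma> x * exp (u * x\<^sup>2) = (1 / sqrt (1 - 2*u*\<sigma>\<^sup>2)) * normal_density 0 (\<sigma> / sqrt (1 - 2*u*\<sigma>\<^sup>2)) x"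
proof -
  define w where "w = 1 - 2*u*\<sigma>\<^sup>2"
  have w0: "0 < w" using assms unfolding w_def by simp
  have e: "exp (-(x\<^sup>2) / (2 * \<sigma>\<^sup>2)) * exp (u * x\<^sup>2) = exp (- (x\<^sup>2) / (2 * (\<sigma> / sqrt w)\<^sup>2))"
    unfolding mult_exp_exp using assms w0 by (simp add: w_def power_divide field_simps)
  have s: "sqrt (2 * pi * \<sigma>\<^sup>2) = sqrt w * sqrt (2 * pi * (\<sigma> / sqrt w)\<^sup>2)"
    using w0 by (simp add: power_divide real_sqrt_mult real_sqrt_divide)
  have "normal_density 0 \<sigma> x * exp (u * x\<^sup>2) = (exp (-(x\<^sup>2) / (2 * \<sigma>\<^sup>2)) * exp (u * x\<^sup>2)) / sqrt (2 * pi * \<sigma>\<^sup>2)"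
    by (simp add: normal_density_def)
  also have "\<dots> = exp (- (x\<^sup>2) / (2 * (\<sigma> / sqrt w)\<^sup>2)) / (sqrt w * sqrt (2 * pi * (\<sigma> / sqrt w)\<^sup>2))"
    by (simp only: e s)
  also have "\<dots> = (1 / sqrt w) * normal_density 0 (\<sigma> / sqrt w) x"
    by (simp add: normal_density_def)
  finally show ?thesis unfolding w_def .
qed

lemma nn_integral_normal_density: "0 < \<sigma> \<Longrightarrow> (\<integral>\<^sup>+x. ennreal (normal_density \<mu> \<sigma> x) \<partial>lborel) = 1"
  by (subst nn_integral_eq_integral) auto

lemma (in prob_space) normal_mgf_sq:
  fixes \<sigma> u :: real
  assumes Y: "distributed M lborel Y (normal_density 0 \<sigma>)"
    and "0 < \<sigma>" "0 \<le> u" "2 * u * \<sigma>\<^sup>2 < 1"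
  shows "(\<integral>\<^sup>+\<omega>. ennreal (exp (u * (Y \<omega>)\<^sup>2)) \<partial>M) = ennreal (1 / sqrt (1 - 2*u*\<sigma>\<^sup>2))"
proof -
  define w where "w = 1 - 2*u*\<sigma>\<^sup>2"
  have w0: "0 < w" using assms unfolding w_def by simp
  have "(\<integral>\<^sup>+\<omega>. ennreal (exp (u * (Y \<omega>)\<^sup>2)) \<partial>M)
      = (\<integral>\<^sup>+x. ennreal (normal_density 0 \<sigma> x) * ennreal (exp (u * x\<^sup>2)) \<partial>lborel)"
    by (rule distributed_nn_integral[OF Y, symmetric]) simp
  also have "\<dots> = (\<integral>\<^sup>+x. ennreal (1 / sqrt w) * ennreal (normal_density 0 (\<sigma> / sqrt w) x) \<partial>lborel)"
    using normal_mgf_sq_density[OF assms(2-4)] w0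
    by (intro nn_integral_cong) (simp add: w_def ennreal_mult[symmetric])
  also have "\<dots> = ennreal (1 / sqrt w) * (\<integral>\<^sup>+x. ennreal (normal_density 0 (\<sigma> / sqrt w) x) \<partial>lborel)"
    by (rule nn_integral_cmult) simp
  also have "\<dots> = ennreal (1 / sqrt w)"
    using assms w0 by (simp add: nn_integral_normal_density)
  finally show ?thesis unfolding w_def .
qed

lemma (in prob_space) lin_comb_normal:
  fixes X :: "'i \<Rightarrow> 'a \<Rightarrow> real" and coef :: "'i \<Rightarrow> real"
  assumes J: "finite J" and ind: "indep_vars (\<lambda>_. borel) X J"
    and nd: "\<And>p. p \<in> J \<Longrightarrow> distributed M lborel (X p) (normal_density 0 \<sigma>0)"
    and s0: "0 < \<sigma>0" and pos: "(\<Sum>p\<in>J. (coef p)\<^sup>2) > 0"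
  shows "distributed M lborel (\<lambda>\<omega>. \<Sum>p\<in>J. coef p * X p \<omega>) (normal_density 0 (\<sigma>0 * sqrt (\<Sum>p\<in>J. (coef p)\<^sup>2)))"
proof -
  define J' where "J' = {p\<in>J. coef p \<noteq> 0}"
  have J'J: "J' \<subseteq> J" unfolding J'_def by auto
  have finJ': "finite J'" using J J'J finite_subset by blast
  have sumJ': "(\<Sum>p\<in>J'. g p) = (\<Sum>p\<in>J. g p)" if "\<And>p. p \<in> J \<Longrightarrow> coef p = 0 \<Longrightarrow> g p = 0" for g :: "'i \<Rightarrow> real"
    by (rule sum.mono_neutral_left[OF J J'J]) (use that in \<open>auto simp: J'_def\<close>)
  have ne: "J' \<noteq> {}"
  proof
    assume "J' = {}"
    then have "(\<Sum>p\<in>J. (coef p)\<^sup>2) = 0" using sumJ'[of "\<lambda>p. (coef p)\<^sup>2"] by simp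
    then show False using pos by simp
  qed
  have ind': "indep_vars (\<lambda>_. borel) (\<lambda>p \<omega>. (\<lambda>x. coef p * x) (X p \<omega>)) J'"
    by (rule indep_vars_compose2[OF indep_vars_subset[OF ind J'J]]) simp
  have nd': "distributed M lborel (\<lambda>\<omega>. coef p * X p \<omega>) (normal_density 0 (\<bar>coef p\<bar> * \<sigma>0))" if p: "p \<in> J'" for p
    using normal_density_affine[OF nd[of p] s0, of "coef p" 0] p by (simp add: J'_def)
  have "distributed M lborel (\<lambda>\<omega>. \<Sum>p\<in>J'. coef p * X p \<omega>)
          (normal_density (\<Sum>p\<in>J'. 0) (sqrt (\<Sum>p\<in>J'. (\<bar>coef p\<bar> * \<sigma>0)\<^sup>2)))"
    by (rule sum_indep_normal[OF finJ' ne ind']) (use s0 nd' in \<open>auto simp: J'_def\<close>)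
  moreover have "(\<lambda>\<omega>. \<Sum>p\<in>J'. coef p * X p \<omega>) = (\<lambda>\<omega>. \<Sum>p\<in>J. coef p * X p \<omega>)"
    by (intro ext sumJ') simp
  moreover have "sqrt (\<Sum>p\<in>J'. (\<bar>coef p\<bar> * \<sigma>0)\<^sup>2) = \<sigma>0 * sqrt (\<Sum>p\<in>J. (coef p)\<^sup>2)"
  proof -
    have "(\<Sum>p\<in>J'. (\<bar>coef p\<bar> * \<sigma>0)\<^sup>2) = \<sigma>0\<^sup>2 * (\<Sum>p\<in>J. (coef p)\<^sup>2)"
      using sumJ'[of "\<lambda>p. (coef p)\<^sup>2"] by (simp add: power_mult_distrib sum_distrib_left[symmetric] mult.commute)
    then show ?thesis using s0 by (simp add: real_sqrt_mult)
  qed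
  ultimately show ?thesis by simp
qed

lemma sumK: "(\<Sum>p\<in>{i}\<times>{..<c}\<times>(UNIV::bool set). g p) = (\<Sum>j<c. g (i,j,True) + g (i,j,False))"
  by (simp add: sum.cartesian_product' UNIV_bool add.commute)

lemma cmod_row:
  "(cmod (\<Sum>j<c. b j * y j))\<^sup>2 = (\<Sum>j<c. Re (b j) * Re (y j) + Im (b j) * (- Im (y j)))\<^sup>2
       + (\<Sum>j<c. Re (b j) * Im (y j) + Im (b j) * Re (y j))\<^sup>2"
  by (simp add: cmod_power2 Re_sum Im_sum algebra_simps)

lemma (in prob_space) chernoff_gauss:
  fixes B :: "'a \<Rightarrow> complex mat" and y :: "nat \<Rightarrow> complex"
  assumes cg: "complex_gaussian_matrix M s2 r c B" and s2: "0 < s2"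
    and ny: "0 < (\<Sum>j<c. (cmod (y j))\<^sup>2)"
    and t: "0 \<le> t" "2 * t * s2 * (\<Sum>j<c. (cmod (y j))\<^sup>2) < 1"
  shows "{\<omega>\<in>space M. a * (\<Sum>j<c. (cmod (y j))\<^sup>2) < (\<Sum>i<r. (cmod (\<Sum>j<c. B \<omega> $$ (i,j) * y j))\<^sup>2)} \<in> events"
    and "measure M {\<omega>\<in>space M. a * (\<Sum>j<c. (cmod (y j))\<^sup>2) < (\<Sum>i<r. (cmod (\<Sum>j<c. B \<omega> $$ (i,j) * y j))\<^sup>2)}
           \<le> exp (- t * a * (\<Sum>j<c. (cmod (y j))\<^sup>2)) * (1 / sqrt (1 - 2 * t * s2 * (\<Sum>j<c. (cmod (y j))\<^sup>2))) ^ r"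
proof -
  define nr where "nr = (\<Sum>j<c. (cmod (y j))\<^sup>2)"
  define q where "q = 2 * t * s2 * nr"
  define X where "X = (\<lambda>(i,j,b) \<omega>. if b then Re (B \<omega> $$ (i,j)) else Im (B \<omega> $$ (i,j)))"
  define IX where "IX = {..<r} \<times> {..<c} \<times> (UNIV :: bool set)"
  define K where "K i = {i}\<times>{..<c}\<times>(UNIV::bool set)" for i :: nat
  define cR where "cR p = (case p of (i,j,b) \<Rightarrow> if b then Re (y j) else - Im (y j))" for p :: "nat\<times>nat\<times>bool"
  define cI where "cI p = (case p of (i,j,b) \<Rightarrow> if b then Im (y j) else Re (y j))" for p :: "nat\<times>nat\<times>bool"
  define R where "R i \<omega> = (\<Sum>p\<in>K i. cR p * X p \<omega>)" for i \<omega>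
  define Iv where "Iv i \<omega> = (\<Sum>p\<in>K i. cI p * X p \<omega>)" for i \<omega>
  define Q where "Q \<omega> = (\<Sum>i<r. (cmod (\<Sum>j<c. B \<omega> $$ (i,j) * y j))\<^sup>2)" for \<omega>
  have ind: "indep_vars (\<lambda>_. borel) X IX" using cg unfolding complex_gaussian_matrix_def X_def IX_def by simp
  have rv: "X p \<in> borel_measurable M" if "p \<in> IX" for p using ind that unfolding indep_vars_def by auto
  have nd: "distributed M lborel (X p) (normal_density 0 (sqrt (s2/2)))" if p: "p \<in> IX" for p
  proof -
    obtain i j b where pij: "p = (i,j,b)" "i < r" "j < c" using p unfolding IX_def by auto
    show ?thesis using cg pij unfolding complex_gaussian_matrix_def
      by (cases b) (auto simp: X_def)
  qed
  have KIX: "K i \<subseteq> IX" if "i < r" for i using that unfolding K_def IX_def by auto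
  have finK: "finite (K i)" for i unfolding K_def by simp
  have Qeq: "Q \<omega> = (\<Sum>i<r. (R i \<omega>)\<^sup>2 + (Iv i \<omega>)\<^sup>2)" for \<omega>
    unfolding Q_def R_def Iv_def K_def
    by (intro sum.cong refl) (simp add: sumK cmod_row cR_def cI_def X_def algebra_simps)
  have nrR: "(\<Sum>p\<in>K i. (cR p)\<^sup>2) = nr" "(\<Sum>p\<in>K i. (cI p)\<^sup>2) = nr" for i
    unfolding K_def nr_def by (simp_all add: sumK cR_def cI_def cmod_power2 add.commute)
  have s0: "0 < sqrt (s2/2)" using s2 by simp
  have ndR: "distributed M lborel (R i) (normal_density 0 (sqrt (s2/2) * sqrt nr))"
       "distributed M lborel (Iv i) (normal_density 0 (sqrt (s2/2) * sqrt nr))" if i: "i < r" for i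
  proof -
    have indK: "indep_vars (\<lambda>_. borel) X (K i)" by (rule indep_vars_subset[OF ind KIX[OF i]])
    show "distributed M lborel (R i) (normal_density 0 (sqrt (s2/2) * sqrt nr))"
      using lin_comb_normal[OF finK indK nd s0, of cR] KIX[OF i] nrR ny
      unfolding R_def[abs_def] nr_def by auto
    show "distributed M lborel (Iv i) (normal_density 0 (sqrt (s2/2) * sqrt nr))"
      using lin_comb_normal[OF finK indK nd s0, of cI] KIX[OF i] nrR ny
      unfolding Iv_def[abs_def] nr_def by auto
  qed
  have sig: "0 < sqrt (s2/2) * sqrt nr" using s2 ny by (simp add: nr_def)
  have sig2: "2 * (2*t) * (sqrt (s2/2) * sqrt nr)\<^sup>2 = q"
    using s2 ny by (simp add: q_def power_mult_distrib nr_def)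
  have q1: "q < 1" using t by (simp add: q_def nr_def)
  have mgf: "(\<integral>\<^sup>+\<omega>. ennreal (exp (2*t * (R i \<omega>)\<^sup>2)) \<partial>M) = ennreal (1 / sqrt (1 - q))"
            "(\<integral>\<^sup>+\<omega>. ennreal (exp (2*t * (Iv i \<omega>)\<^sup>2)) \<partial>M) = ennreal (1 / sqrt (1 - q))" if i: "i < r" for i
    using normal_mgf_sq[OF ndR(1)[OF i] sig, of "2*t"] normal_mgf_sq[OF ndR(2)[OF i] sig, of "2*t"] t sig2 q1
    by auto
  have measR: "R i \<in> borel_measurable M" "Iv i \<in> borel_measurable M" if "i < r" for i
    unfolding R_def[abs_def] Iv_def[abs_def] using rv KIX[OF that]
    by (auto intro!: borel_measurable_sum borel_measurable_times)
  define W where "W i \<omega> = exp (t * ((R i \<omega>)\<^sup>2 + (Iv i \<omega>)\<^sup>2))" for i \<omega>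
  have EW: "(\<integral>\<^sup>+\<omega>. ennreal (W i \<omega>) \<partial>M) \<le> ennreal (1 / sqrt (1 - q))" if i: "i < r" for i
  proof -
    have "(\<integral>\<^sup>+\<omega>. ennreal (W i \<omega>) \<partial>M) \<le> (\<integral>\<^sup>+\<omega>. ennreal (1/2 * exp (2*t * (R i \<omega>)\<^sup>2)) + ennreal (1/2 * exp (2*t * (Iv i \<omega>)\<^sup>2)) \<partial>M)"
    proof (rule nn_integral_mono)
      fix \<omega>
      have "exp (t * ((R i \<omega>)\<^sup>2 + (Iv i \<omega>)\<^sup>2)) \<le> 1/2 * exp (2*t * (R i \<omega>)\<^sup>2) + 1/2 * exp (2*t * (Iv i \<omega>)\<^sup>2)"
      proof -
        define A where "A = exp (t * (R i \<omega>)\<^sup>2)"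
        define C where "C = exp (t * (Iv i \<omega>)\<^sup>2)"
        have "exp (t * ((R i \<omega>)\<^sup>2 + (Iv i \<omega>)\<^sup>2)) = A * C" by (simp add: A_def C_def distrib_left exp_add)
        moreover have "exp (2*t * (R i \<omega>)\<^sup>2) = A\<^sup>2" "exp (2*t * (Iv i \<omega>)\<^sup>2) = C\<^sup>2"
          by (simp_all add: A_def C_def power2_eq_square exp_add[symmetric])
        moreover have "A * C \<le> 1/2 * A\<^sup>2 + 1/2 * C\<^sup>2" using sum_squares_ge_zero[of "A - C" 0]
          by (simp add: power2_eq_square algebra_simps)
        ultimately show ?thesis by simp
      qed
      then show "ennreal (W i \<omega>) \<le> ennreal (1/2 * exp (2*t * (R i \<omega>)\<^sup>2)) + ennreal (1/2 * exp (2*t * (Iv i \<omega>)\<^sup>2))"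
        by (simp add: W_def ennreal_plus[symmetric] del: ennreal_plus)
    qed
    also have "\<dots> = (\<integral>\<^sup>+\<omega>. ennreal (1/2) * ennreal (exp (2*t * (R i \<omega>)\<^sup>2)) \<partial>M) + (\<integral>\<^sup>+\<omega>. ennreal (1/2) * ennreal (exp (2*t * (Iv i \<omega>)\<^sup>2)) \<partial>M)"
    proof -
      have em: "\<And>x::real. ennreal (1/2 * exp x) = ennreal (1/2) * ennreal (exp x)" by (rule ennreal_mult) auto
      show ?thesis unfolding em using measR[OF i] by (intro nn_integral_add) auto
    qed
    also have "\<dots> = ennreal (1/2) * ennreal (1 / sqrt (1 - q)) + ennreal (1/2) * ennreal (1 / sqrt (1 - q))"
      using measR[OF i] mgf[OF i] by (simp add: nn_integral_cmult)
    also have "\<dots> = ennreal (1 / sqrt (1 - q))"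
    proof -
      have h: "ennreal (1/2) * ennreal (1 / sqrt (1 - q)) = ennreal (1/2 * (1 / sqrt (1 - q)))"
        by (rule ennreal_mult[symmetric]) (use q1 in auto)
      have h2: "ennreal (1/2 * (1 / sqrt (1 - q))) + ennreal (1/2 * (1 / sqrt (1 - q))) = ennreal (1 / sqrt (1 - q))"
        by (subst ennreal_plus[symmetric]) (use q1 in auto)
      show ?thesis by (simp only: h h2)
    qed
    finally show ?thesis .
  qed
  define g where "g i f = exp (t * ((\<Sum>p\<in>K i. cR p * f p)\<^sup>2 + (\<Sum>p\<in>K i. cI p * f p)\<^sup>2))" for i and f :: "nat\<times>nat\<times>bool \<Rightarrow> real"
  have indW: "indep_vars (\<lambda>_. borel) W {..<r}"
  proof -
    have "indep_vars (\<lambda>j. PiM (K j) (\<lambda>_. borel)) (\<lambda>j \<omega>. restrict (\<lambda>p. X p \<omega>) (K j)) {..<r}"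
      by (rule indep_vars_restrict[OF ind]) (auto simp: IX_def disjoint_family_on_def K_def)
    then have "indep_vars (\<lambda>_. borel) (\<lambda>j \<omega>. g j (restrict (\<lambda>p. X p \<omega>) (K j))) {..<r}"
    proof (rule indep_vars_compose2)
      fix j :: nat
      show "g j \<in> borel_measurable (PiM (K j) (\<lambda>_. borel))"
      proof -
        have comp: "(\<lambda>f. f p) \<in> borel_measurable (PiM (K j) (\<lambda>_. borel))" if "p \<in> K j" for p
          using measurable_component_singleton[OF that, of "\<lambda>_. borel"] by simp
        have s1: "(\<lambda>f. \<Sum>p\<in>K j. cR p * f p) \<in> borel_measurable (PiM (K j) (\<lambda>_. borel))"
          by (rule borel_measurable_sum) (rule borel_measurable_times[OF borel_measurable_const comp])
        have s2: "(\<lambda>f. \<Sum>p\<in>K j. cI p * f p) \<in> borel_measurable (PiM (K j) (\<lambda>_. borel))"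
          by (rule borel_measurable_sum) (rule borel_measurable_times[OF borel_measurable_const comp])
        show ?thesis unfolding g_def using s1 s2 by measurable
      qed
    qed
    moreover have "(\<lambda>\<omega>. g j (restrict (\<lambda>p. X p \<omega>) (K j))) = W j" for j
      unfolding g_def W_def R_def Iv_def by (intro ext) (simp cong: sum.cong)
    ultimately show ?thesis by simp
  qed
  have measQ: "Q \<in> borel_measurable M"
    unfolding Qeq[abs_def] using measR by (auto intro!: borel_measurable_sum borel_measurable_add borel_measurable_power)
  define E where "E = {\<omega>\<in>space M. a * nr < Q \<omega>}"
  have Eev: "E \<in> events" unfolding E_def using measQ by measurable
  then show "{\<omega>\<in>space M. a * (\<Sum>j<c. (cmod (y j))\<^sup>2) < (\<Sum>i<r. (cmod (\<Sum>j<c. B \<omega> $$ (i,j) * y j))\<^sup>2)} \<in> events"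
    unfolding E_def Q_def nr_def .
  have "emeasure M E = (\<integral>\<^sup>+\<omega>. indicator E \<omega> \<partial>M)" using Eev by simp
  also have "\<dots> \<le> (\<integral>\<^sup>+\<omega>. ennreal (exp (- t * a * nr)) * ennreal (\<Prod>i<r. W i \<omega>) \<partial>M)"
  proof (rule nn_integral_mono)
    fix \<omega> assume \<omega>: "\<omega> \<in> space M"
    have prodW: "(\<Prod>i<r. W i \<omega>) = exp (t * Q \<omega>)"
    proof -
      have "(\<Prod>i<r. W i \<omega>) = exp (\<Sum>i<r. t * ((R i \<omega>)\<^sup>2 + (Iv i \<omega>)\<^sup>2))"
        unfolding W_def by (rule exp_sum[symmetric]) simp
      also have "(\<Sum>i<r. t * ((R i \<omega>)\<^sup>2 + (Iv i \<omega>)\<^sup>2)) = t * Q \<omega>"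
        unfolding Qeq by (rule sum_distrib_left[symmetric])
      finally show ?thesis .
    qed
    show "indicator E \<omega> \<le> ennreal (exp (- t * a * nr)) * ennreal (\<Prod>i<r. W i \<omega>)"
    proof (cases "\<omega> \<in> E")
      case True
      then have "t * (a * nr) \<le> t * Q \<omega>" using t unfolding E_def by (intro mult_left_mono) auto
      then have "1 \<le> exp (- t * a * nr) * exp (t * Q \<omega>)" by (simp add: mult_exp_exp)
      then show ?thesis using True by (simp add: prodW ennreal_mult[symmetric])
    qed simp
  qed
  also have "\<dots> = ennreal (exp (- t * a * nr)) * (\<integral>\<^sup>+\<omega>. ennreal (\<Prod>i<r. W i \<omega>) \<partial>M)"
    using measR by (intro nn_integral_cmult) (auto simp: W_def intro!: borel_measurable_prod)
  also have "(\<integral>\<^sup>+\<omega>. ennreal (\<Prod>i<r. W i \<omega>) \<partial>M) = (\<Prod>i<r. \<integral>\<^sup>+\<omega>. ennreal (W i \<omega>) \<partial>M)"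
  proof -
    have indW': "indep_vars (\<lambda>_. borel) (\<lambda>i \<omega>. ennreal (W i \<omega>)) {..<r}"
      by (rule indep_vars_compose2[OF indW]) simp
    have "(\<integral>\<^sup>+\<omega>. ennreal (\<Prod>i<r. W i \<omega>) \<partial>M) = (\<integral>\<^sup>+\<omega>. (\<Prod>i<r. ennreal (W i \<omega>)) \<partial>M)"
      by (intro nn_integral_cong) (simp add: prod_ennreal W_def)
    also have "\<dots> = (\<Prod>i<r. \<integral>\<^sup>+\<omega>. ennreal (W i \<omega>) \<partial>M)"
      by (rule indep_vars_nn_integral[OF _ indW']) auto
    finally show ?thesis .
  qed
  also have "\<dots> \<le> (\<Prod>i<r. ennreal (1 / sqrt (1 - q)))"
    by (rule prod_mono_ennreal) (auto simp: EW)
  also have "\<dots> = ennreal ((1 / sqrt (1 - q)) ^ r)"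
    using q1 by (simp add: prod_ennreal ennreal_power)
  finally have em: "emeasure M E \<le> ennreal (exp (- t * a * nr)) * ennreal ((1 / sqrt (1 - q)) ^ r)"
    by (simp add: mult_left_mono)
  have "ennreal (exp (- t * a * nr)) * ennreal ((1 / sqrt (1 - q)) ^ r) = ennreal (exp (- t * a * nr) * (1 / sqrt (1 - q)) ^ r)"
    by (rule ennreal_mult[symmetric]) (use q1 in auto)
  with em have "emeasure M E \<le> ennreal (exp (- t * a * nr) * (1 / sqrt (1 - q)) ^ r)" by simp
  then have "measure M E \<le> exp (- t * a * nr) * (1 / sqrt (1 - q)) ^ r"
    using q1 by (simp add: emeasure_eq_measure)
  then show "measure M {\<omega>\<in>space M. a * (\<Sum>j<c. (cmod (y j))\<^sup>2) < (\<Sum>i<r. (cmod (\<Sum>j<c. B \<omega> $$ (i,j) * y j))\<^sup>2)}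
           \<le> exp (- t * a * (\<Sum>j<c. (cmod (y j))\<^sup>2)) * (1 / sqrt (1 - 2 * t * s2 * (\<Sum>j<c. (cmod (y j))\<^sup>2))) ^ r"
    unfolding E_def Q_def nr_def q_def .
qed



context cof_vec_space
begin

lemma span_maximal_eq:
  assumes S: "S \<subseteq> carrier_vec n" and fin: "finite S"
    and max: "maximal U (\<lambda>T. T \<subseteq> S \<and> lin_indpt T)"
  shows "span U = span S"
proof -
  have "lin_indpt U" "U \<subseteq> S" by (metis max maximal_def)+
  show "span U = span S"
  proof (rule ccontr)
    assume "span U \<noteq> span S"
    have "span U \<subseteq> span S" using span_is_monotone \<open>U\<subseteq>S\<close> by metis
    then have "\<not> S \<subseteq> span U" by (meson \<open>U \<subseteq> S\<close> \<open>span U \<noteq> span S\<close> S span_is_submodule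
      span_is_subset subset_antisym subset_trans)
    then obtain s where "s\<in>S" "s \<notin> span U" by blast
    then have "lin_indpt (U\<union>{s})" using lindep_span
      by (meson \<open>U \<subseteq> S\<close> \<open>lin_indpt U\<close> S lin_dep_iff_in_span rev_subsetD span_mem subset_trans)
    have "s\<notin>U" using \<open>U \<subseteq> S\<close> \<open>s \<notin> span U\<close> S span_mem by auto
    then have "(U\<union>{s}) \<subseteq> S \<and> lin_indpt (U\<union>{s})" using \<open>U \<subseteq> S\<close> \<open>lin_indpt (U \<union> {s})\<close> \<open>s \<in> S\<close> by auto
    then have "\<not>maximal U (\<lambda>T. T \<subseteq> S \<and> lin_indpt T)"
      unfolding maximal_def using Un_subset_iff \<open>s \<notin> U\<close> insert_subset  order_refl by auto
    then show False using max by metis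
  qed
qed

lemma proj_decomp_gen:
  fixes P :: "'a mat"
  assumes P: "P \<in> carrier_mat n n" and idem: "P * P = P" and rk: "rank P = k"
  shows "\<exists>us. length us = k \<and> set us \<subseteq> carrier_vec n \<and> corthogonal us \<and> (\<forall>u\<in>set us. P *\<^sub>v u = u)
            \<and> (\<forall>x\<in>carrier_vec n. P *\<^sub>v x \<in> span (set us))"
proof -
  have colsP: "set (cols P) \<subseteq> carrier_vec n" using P cols_dim by blast
  have li0: "lin_indpt {}"
    by (metis (no_types) empty_subsetI fin_dim finite_basis_exists subset_li_is_li vec_vs vectorspace.basis_def)
  obtain S where finS: "finite S" and maxS: "maximal S (\<lambda>T. T \<subseteq> set (cols P) \<and> lin_indpt T)"
    using maximal_exists_superset[of "set (cols P)" "\<lambda>T. T \<subseteq> set (cols P) \<and> lin_indpt T" "{}"] li0 by auto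
  have cardS: "card S = k" using rank_card_indpt[OF P maxS] rk by simp
  have spanS: "span S = span (set (cols P))" by (rule span_maximal_eq[OF colsP _ maxS]) simp
  have SP: "S \<subseteq> set (cols P)" "lin_indpt S" using maxS unfolding maximal_def by auto
  obtain ws where ws: "set ws = S" "distinct ws" using finite_distinct_list[OF finS] by blast
  define us where "us = gram_schmidt n ws"
  have wsC: "set ws \<subseteq> carrier_vec n" using ws SP colsP by auto
  note gs = gram_schmidt_result[OF wsC ws(2) _ us_def]
  have li: "\<not> lin_dep (set ws)" using SP ws by simp
  have spanus: "span (set us) = span (set (cols P))" using gs(1)[OF li] ws spanS by simp
  have colsp: "P *\<^sub>v x \<in> span (set (cols P))" if "x \<in> carrier_vec n" for x
    using col_space_eq[OF P] that P unfolding col_space_def by auto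
  have fix_u: "P *\<^sub>v u = u" if u: "u \<in> set us" for u
  proof -
    have "u \<in> span (set (cols P))" using u spanus gs(3)[OF li] span_mem by blast
    then obtain z where z: "z \<in> carrier_vec n" "P *\<^sub>v z = u"
      using col_space_eq[OF P] P unfolding col_space_def by auto
    have "P *\<^sub>v u = (P * P) *\<^sub>v z" using z P by (simp add: assoc_mult_mat_vec)
    then show ?thesis using idem z by simp
  qed
  show ?thesis
    using gs[OF li] cardS ws fix_u colsp spanus
    by (intro exI[of _ us]) (auto simp: distinct_card)
qed

lemma proj_decomp_gen2:
  fixes P :: "'a mat"
  assumes P: "P \<in> carrier_mat n n" and idem: "P * P = P" and rk: "rank P = k"
  shows "\<exists>us. length us = k \<and> set us \<subseteq> carrier_vec n \<and> corthogonal us \<and> (\<forall>u\<in>set us. P *\<^sub>v u = u)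
            \<and> (\<forall>x\<in>carrier_vec n. \<exists>c. P *\<^sub>v x = mat_of_cols n us *\<^sub>v vec k c)"
proof -
  obtain us where us: "length us = k" "set us \<subseteq> carrier_vec n" "corthogonal us" "\<forall>u\<in>set us. P *\<^sub>v u = u"
    "\<forall>x\<in>carrier_vec n. P *\<^sub>v x \<in> span (set us)"
    using proj_decomp_gen[OF P idem rk] by blast
  have "\<exists>c. P *\<^sub>v x = mat_of_cols n us *\<^sub>v vec k c" if x: "x \<in> carrier_vec n" for x
  proof -
    have "P *\<^sub>v x \<in> span_list us" using us(5) x span_list_as_span[OF us(2)] by auto
    then obtain c where c: "P *\<^sub>v x = lincomb_list c us" by (auto elim: in_span_listE)
    also have "\<dots> = mat_of_cols n us *\<^sub>v vec (length us) c"
      by (rule lincomb_list_as_mat_mult) (use us(2) in auto)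
    finally show ?thesis using us(1) by blast
  qed
  then show ?thesis using us by blast
qed

end


lemma adj_entry:
  fixes A :: "complex mat"
  assumes "A \<in> carrier_mat n n" "i < n" "j < n"
  shows "mat_adjoint A $$ (i,j) = cnj (A $$ (j,i))"
  using assms unfolding mat_adjoint_def by (simp add: mat_of_rows_index)

lemma mat_of_cols_mult_index:
  fixes us :: "complex vec list"
  assumes "i < n" "length us = k"
  shows "(mat_of_cols n us *\<^sub>v vec k c) $ i = (\<Sum>l<k. us ! l $ i * c l)"
  using assms by (simp add: scalar_prod_def mat_of_cols_index row_def atLeast0LessThan)

lemma proj_decomp:
  fixes P :: "complex mat"
  assumes "orth_proj_rank n k P"
  shows "\<exists>u. orthon n k u \<and> (\<forall>i<n. \<forall>j<n. P $$ (i,j) = (\<Sum>l<k. u (l,i) * cnj (u (l,j))))"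
proof -
  have P: "P \<in> carrier_mat n n" and adj: "mat_adjoint P = P" and idem: "P * P = P" and rk: "vec_space.rank n P = k"
    using assms unfolding orth_proj_rank_def by auto
  obtain us where us: "length us = k" "set us \<subseteq> carrier_vec n" "corthogonal us" "\<forall>u\<in>set us. P *\<^sub>v u = u"
    "\<forall>x\<in>carrier_vec n. \<exists>c. P *\<^sub>v x = mat_of_cols n us *\<^sub>v vec k c"
    using cof_vec_space.proj_decomp_gen2[OF P idem rk] by blast
  have herm: "P $$ (i,j) = cnj (P $$ (j,i))" if "i < n" "j < n" for i j
    using adj_entry[OF P that] adj by simp
  have usl: "us ! l \<in> carrier_vec n" if "l < k" for l using us(1,2) that by auto
  define G where "G l m = (\<Sum>i<n. us ! l $ i * cnj (us ! m $ i))" for l m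
  have Gc: "G l m = us ! l \<bullet>c us ! m" if "l < k" "m < k" for l m
    using usl[OF that(2)] unfolding G_def by (simp add: scalar_prod_def atLeast0LessThan)
  have G0: "G l m = 0 \<longleftrightarrow> l \<noteq> m" if "l < k" "m < k" for l m
    using corthogonalD[OF us(3), of l m] that us(1) Gc[OF that] by simp
  define nr where "nr l = (\<Sum>i<n. (cmod (us ! l $ i))\<^sup>2)" for l
  have Gnr: "G l l = complex_of_real (nr l)" for l
    unfolding G_def nr_def by (simp only: of_real_sum complex_norm_square)
  have nr0: "0 < nr l" if "l < k" for l
  proof -
    have "0 \<le> nr l" unfolding nr_def by (simp add: sum_nonneg)
    moreover have "nr l \<noteq> 0" using G0[OF that that] Gnr by auto
    ultimately show ?thesis by simp
  qed
  define u where "u p = us ! fst p $ snd p / complex_of_real (sqrt (nr (fst p)))" for p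
  have uu: "u (l,i) * cnj (u (m,i)) = us ! l $ i * cnj (us ! m $ i) / complex_of_real (sqrt (nr l) * sqrt (nr m))" for l m i
    by (simp add: u_def)
  have orth: "orthon n k u"
    unfolding orthon_def
  proof (intro allI impI)
    fix l m assume l: "l < k" and m: "m < k"
    have "(\<Sum>i<n. u (l,i) * cnj (u (m,i))) = G l m / complex_of_real (sqrt (nr l) * sqrt (nr m))"
      unfolding uu G_def by (simp add: sum_divide_distrib)
    also have "\<dots> = (if l = m then 1 else 0)"
    proof (cases "l = m")
      case True
      have "sqrt (nr l) * sqrt (nr l) = nr l" using nr0[OF l] by simp
      then show ?thesis using True Gnr nr0[OF l] by simp
    next
      case False then show ?thesis using G0[OF l m] by simp
    qed
    finally show "(\<Sum>i<n. u (l,i) * cnj (u (m,i))) = (if l = m then 1 else 0)" .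
  qed
  have entries: "P $$ (i,j) = (\<Sum>l<k. u (l,i) * cnj (u (l,j)))" if i: "i < n" and j: "j < n" for i j
  proof -
    obtain c where c: "P *\<^sub>v unit_vec n j = mat_of_cols n us *\<^sub>v vec k c" using us(5) unit_vec_carrier by blast
    have Pc: "P $$ (i',j) = (\<Sum>l<k. us ! l $ i' * c l)" if "i' < n" for i'
    proof -
      have "P $$ (i',j) = (P *\<^sub>v unit_vec n j) $ i'" using P that j by simp
      then show ?thesis using c mat_of_cols_mult_index[OF that us(1)] by simp
    qed
    have cm: "c m = cnj (us ! m $ j) / G m m" if m: "m < k" for m
    proof -
      have "(\<Sum>i'<n. P $$ (i',j) * cnj (us ! m $ i')) = (\<Sum>l<k. c l * G l m)"
        by (simp add: Pc G_def sum_distrib_left sum_distrib_right sum.swap[of _ "{..<n}"] ac_simps)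
      also have "\<dots> = c m * G m m"
        by (subst sum.remove[of _ m]) (use m G0 in \<open>auto intro!: sum.neutral\<close>)
      finally have e1: "(\<Sum>i'<n. P $$ (i',j) * cnj (us ! m $ i')) = c m * G m m" .
      have "(\<Sum>i'<n. P $$ (i',j) * cnj (us ! m $ i')) = cnj (\<Sum>i'<n. P $$ (j,i') * us ! m $ i')"
        by (simp add: cnj_sum herm[OF _ j])
      also have "(\<Sum>i'<n. P $$ (j,i') * us ! m $ i') = (P *\<^sub>v us ! m) $ j"
        using P j usl[OF m] by (simp add: scalar_prod_def row_def atLeast0LessThan)
      also have "\<dots> = us ! m $ j" using us(4) us(1) m by simp
      finally have "c m * G m m = cnj (us ! m $ j)" using e1 by simp
      moreover have "G m m \<noteq> 0" using G0[OF m m] by simp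
      ultimately show ?thesis by (simp add: field_simps)
    qed
    have "P $$ (i,j) = (\<Sum>l<k. us ! l $ i * (cnj (us ! l $ j) / G l l))" using Pc[OF i] cm by simp
    also have "\<dots> = (\<Sum>l<k. u (l,i) * cnj (u (l,j)))"
    proof (rule sum.cong[OF refl])
      fix l assume "l \<in> {..<k}"
      then have l: "l < k" by simp
      have "complex_of_real (sqrt (nr l)) * complex_of_real (sqrt (nr l)) = complex_of_real (nr l)"
        using nr0[OF l] by (simp flip: of_real_mult)
      then show "us ! l $ i * (cnj (us ! l $ j) / G l l) = u (l,i) * cnj (u (l,j))"
        by (simp add: u_def Gnr)
    qed
    finally show ?thesis .
  qed
  show ?thesis using orth entries by blast
qed


lemma mv_index:
  fixes A :: "complex mat"
  assumes "A \<in> carrier_mat p q" "x \<in> carrier_vec q" "i < p"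
  shows "(A *\<^sub>v x) $ i = (\<Sum>j<q. A $$ (i,j) * x $ j)"
  using assms by (simp add: scalar_prod_def row_def atLeast0LessThan)
lemma cprod_sum:
  fixes x y :: "complex vec"
  assumes "y \<in> carrier_vec p"
  shows "x \<bullet>c y = (\<Sum>i<p. x $ i * cnj (y $ i))"
  using assms by (simp add: scalar_prod_def atLeast0LessThan)

lemma mm_index:
  fixes A B :: "complex mat"
  assumes "A \<in> carrier_mat p q" "B \<in> carrier_mat q r" "i < p" "j < r"
  shows "(A * B) $$ (i,j) = (\<Sum>l<q. A $$ (i,l) * B $$ (l,j))"
  using assms by (simp add: scalar_prod_def row_def col_def atLeast0LessThan)

lemma adj_carrier:
  fixes A :: "complex mat"
  assumes "A \<in> carrier_mat p q"
  shows "mat_adjoint A \<in> carrier_mat q p"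
  using assms unfolding mat_adjoint_def by auto

lemma adj_entry2:
  fixes A :: "complex mat"
  assumes "A \<in> carrier_mat p q" "i < q" "j < p"
  shows "mat_adjoint A $$ (i,j) = cnj (A $$ (j,i))"
  using assms unfolding mat_adjoint_def by (simp add: mat_of_rows_index)


lemma herm_adj:
  fixes A :: "complex mat"
  assumes "A \<in> carrier_mat m m" "\<And>i j. i < m \<Longrightarrow> j < m \<Longrightarrow> A $$ (i,j) = cnj (A $$ (j,i))"
  shows "mat_adjoint A = A"
proof (rule eq_matI)
  show "dim_row (mat_adjoint A) = dim_row A" "dim_col (mat_adjoint A) = dim_col A"
    using adj_carrier[OF assms(1)] assms(1) by auto
  fix i j assume "i < dim_row A" "j < dim_col A"
  then have ij: "i < m" "j < m" using assms(1) by auto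
  have "mat_adjoint A $$ (i,j) = cnj (A $$ (j,i))" using adj_entry2[OF assms(1) ij] .
  also have "\<dots> = A $$ (i,j)" using assms(2)[OF ij] by (rule sym)
  finally show "mat_adjoint A $$ (i,j) = A $$ (i,j)" .
qed


lemma herm_ABA:
  fixes A C :: "complex mat"
  assumes A: "A \<in> carrier_mat m m" and C: "C \<in> carrier_mat m m"
    and hA: "\<And>i j. i < m \<Longrightarrow> j < m \<Longrightarrow> A $$ (i,j) = cnj (A $$ (j,i))"
    and hC: "\<And>i j. i < m \<Longrightarrow> j < m \<Longrightarrow> C $$ (i,j) = cnj (C $$ (j,i))"
    and i: "i < m" and j: "j < m"
  shows "(A * C * A) $$ (i,j) = cnj ((A * C * A) $$ (j,i))"
proof -
  have e: "(A * C * A) $$ (r,s) = (\<Sum>b<m. (\<Sum>a<m. A $$ (r,a) * C $$ (a,b)) * A $$ (b,s))" if "r < m" "s < m" for r s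
  proof -
    have "(A*C*A) $$ (r,s) = (\<Sum>b<m. (A*C) $$ (r,b) * A $$ (b,s))"
      by (rule mm_index[OF mult_carrier_mat[OF A C] A that])
    also have "\<dots> = (\<Sum>b<m. (\<Sum>a<m. A $$ (r,a) * C $$ (a,b)) * A $$ (b,s))"
      by (intro sum.cong refl arg_cong2[where f="(*)"]) (use that in \<open>simp add: mm_index[OF A C]\<close>)
    finally show ?thesis .
  qed
  have hA': "cnj (A $$ (a,b)) = A $$ (b,a)" if "a < m" "b < m" for a b using hA[OF that(2,1)] by simp
  have hC': "cnj (C $$ (a,b)) = C $$ (b,a)" if "a < m" "b < m" for a b using hC[OF that(2,1)] by simp
  have "cnj ((A * C * A) $$ (j,i)) = (\<Sum>b<m. (\<Sum>a<m. A $$ (a,j) * C $$ (b,a)) * A $$ (i,b))"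
    using i j by (simp add: e cnj_sum hA' hC')
  also have "\<dots> = (\<Sum>b<m. \<Sum>a<m. A $$ (i,b) * C $$ (b,a) * A $$ (a,j))"
    by (simp add: sum_distrib_right sum_distrib_left ac_simps)
  also have "\<dots> = (\<Sum>a<m. \<Sum>b<m. A $$ (i,b) * C $$ (b,a) * A $$ (a,j))"
    by (rule sum.swap)
  also have "\<dots> = (A * C * A) $$ (i,j)"
    using i j by (simp add: e sum_distrib_right)
  finally show ?thesis by simp
qed


lemma tensor_carrier: "tensor_id n N P \<in> carrier_mat (n*N) (n*N)"
  unfolding tensor_id_def by simp

lemma tensor_index: "r < n*N \<Longrightarrow> s < n*N \<Longrightarrow> tensor_id n N P $$ (r,s) = (if r mod N = s mod N then P $$ (r div N, s div N) else 0)"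
  unfolding tensor_id_def by simp

lemma div_lt: "r < n*N \<Longrightarrow> r div N < (n::nat)"
  by (simp add: less_mult_imp_div_less)

lemma quad_sum:
  fixes T X :: "nat \<Rightarrow> nat \<Rightarrow> complex" and v :: "nat \<Rightarrow> complex"
  assumes hT: "\<And>r s. r < m \<Longrightarrow> s < m \<Longrightarrow> cnj (T r s) = T s r"
  shows "(\<Sum>r<m. (\<Sum>s<m. (\<Sum>b<m. (\<Sum>a<m. T r a * X a b) * T b s) * v s) * cnj (v r))
       = (\<Sum>a<m. \<Sum>b<m. X a b * (\<Sum>s<m. T b s * v s) * cnj (\<Sum>r<m. T a r * v r))"
proof -
  have "(\<Sum>a<m. \<Sum>b<m. X a b * (\<Sum>s<m. T b s * v s) * cnj (\<Sum>r<m. T a r * v r))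
      = (\<Sum>a<m. \<Sum>b<m. X a b * (\<Sum>s<m. T b s * v s) * (\<Sum>r<m. T r a * cnj (v r)))"
    by (intro sum.cong refl arg_cong2[where f="(*)"]) (simp add: cnj_sum hT)
  also have "\<dots> = (\<Sum>a<m. \<Sum>b<m. \<Sum>s<m. \<Sum>r<m. T r a * X a b * T b s * v s * cnj (v r))"
    by (simp add: sum_distrib_left sum_distrib_right ac_simps)
  also have "\<dots> = (\<Sum>r<m. \<Sum>s<m. \<Sum>b<m. \<Sum>a<m. T r a * X a b * T b s * v s * cnj (v r))"
  proof -
    have "(\<Sum>a<m. \<Sum>b<m. \<Sum>s<m. \<Sum>r<m. T r a * X a b * T b s * v s * cnj (v r))
        = (\<Sum>a<m. \<Sum>b<m. \<Sum>r<m. \<Sum>s<m. T r a * X a b * T b s * v s * cnj (v r))"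
      by (rule sum.cong[OF refl], rule sum.cong[OF refl], rule sum.swap)
    also have "\<dots> = (\<Sum>a<m. \<Sum>r<m. \<Sum>b<m. \<Sum>s<m. T r a * X a b * T b s * v s * cnj (v r))"
      by (rule sum.cong[OF refl], rule sum.swap)
    also have "\<dots> = (\<Sum>r<m. \<Sum>a<m. \<Sum>b<m. \<Sum>s<m. T r a * X a b * T b s * v s * cnj (v r))"
      by (rule sum.swap)
    also have "\<dots> = (\<Sum>r<m. \<Sum>a<m. \<Sum>s<m. \<Sum>b<m. T r a * X a b * T b s * v s * cnj (v r))"
      by (rule sum.cong[OF refl], rule sum.cong[OF refl], rule sum.swap)
    also have "\<dots> = (\<Sum>r<m. \<Sum>s<m. \<Sum>a<m. \<Sum>b<m. T r a * X a b * T b s * v s * cnj (v r))"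
      by (rule sum.cong[OF refl], rule sum.swap)
    also have "\<dots> = (\<Sum>r<m. \<Sum>s<m. \<Sum>b<m. \<Sum>a<m. T r a * X a b * T b s * v s * cnj (v r))"
      by (rule sum.cong[OF refl], rule sum.cong[OF refl], rule sum.swap)
    finally show ?thesis .
  qed
  also have "\<dots> = (\<Sum>r<m. (\<Sum>s<m. (\<Sum>b<m. (\<Sum>a<m. T r a * X a b) * T b s) * v s) * cnj (v r))"
    by (simp add: sum_distrib_left sum_distrib_right ac_simps)
  finally show ?thesis by simp
qed

lemma quad_X:
  fixes Bm :: "nat \<Rightarrow> nat \<Rightarrow> complex" and w :: "nat \<Rightarrow> complex" and \<alpha> :: real
  shows "(\<Sum>a<m. \<Sum>b<m. ((if a = b then 1 else 0) + complex_of_real \<alpha> * (\<Sum>i<d. cnj (Bm i a) * Bm i b)) * w b * cnj (w a))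
       = complex_of_real ((\<Sum>a<m. (cmod (w a))\<^sup>2) + \<alpha> * (\<Sum>i<d. (cmod (\<Sum>b<m. Bm i b * w b))\<^sup>2))"
proof -
  have e1: "(\<Sum>a<m. \<Sum>b<m. (if a = b then 1 else 0) * w b * cnj (w a)) = complex_of_real (\<Sum>a<m. (cmod (w a))\<^sup>2)"
  proof -
    have "(\<Sum>a<m. \<Sum>b<m. (if a = b then 1 else 0) * w b * cnj (w a)) = (\<Sum>a<m. \<Sum>b<m. (if a = b then w a * cnj (w a) else 0))"
      by (intro sum.cong refl) auto
    also have "\<dots> = (\<Sum>a<m. w a * cnj (w a))" by simp
    also have "\<dots> = complex_of_real (\<Sum>a<m. (cmod (w a))\<^sup>2)" by (simp only: of_real_sum complex_norm_square)
    finally show ?thesis .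
  qed
  have e2: "(\<Sum>a<m. \<Sum>b<m. (\<Sum>i<d. cnj (Bm i a) * Bm i b) * w b * cnj (w a))
       = complex_of_real (\<Sum>i<d. (cmod (\<Sum>b<m. Bm i b * w b))\<^sup>2)"
  proof -
    have "(\<Sum>a<m. \<Sum>b<m. (\<Sum>i<d. cnj (Bm i a) * Bm i b) * w b * cnj (w a))
        = (\<Sum>a<m. \<Sum>b<m. \<Sum>i<d. cnj (Bm i a) * Bm i b * w b * cnj (w a))"
      by (simp add: sum_distrib_right)
    also have "\<dots> = (\<Sum>a<m. \<Sum>i<d. \<Sum>b<m. cnj (Bm i a) * Bm i b * w b * cnj (w a))"
      by (rule sum.cong[OF refl], rule sum.swap)
    also have "\<dots> = (\<Sum>i<d. \<Sum>a<m. \<Sum>b<m. cnj (Bm i a) * Bm i b * w b * cnj (w a))"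
      by (rule sum.swap)
    also have "\<dots> = (\<Sum>i<d. (\<Sum>b<m. Bm i b * w b) * cnj (\<Sum>a<m. Bm i a * w a))"
      by (simp add: cnj_sum sum_distrib_left sum_distrib_right ac_simps)
    also have "\<dots> = complex_of_real (\<Sum>i<d. (cmod (\<Sum>b<m. Bm i b * w b))\<^sup>2)"
      by (simp only: of_real_sum complex_norm_square)
    finally show ?thesis .
  qed
  have "(\<Sum>a<m. \<Sum>b<m. ((if a = b then 1 else 0) + complex_of_real \<alpha> * (\<Sum>i<d. cnj (Bm i a) * Bm i b)) * w b * cnj (w a))
      = (\<Sum>a<m. \<Sum>b<m. (if a = b then 1 else 0) * w b * cnj (w a)) + complex_of_real \<alpha> * (\<Sum>a<m. \<Sum>b<m. (\<Sum>i<d. cnj (Bm i a) * Bm i b) * w b * cnj (w a))"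
    by (simp add: distrib_right sum.distrib sum_distrib_left[symmetric] mult.assoc)
  also have "\<dots> = complex_of_real ((\<Sum>a<m. (cmod (w a))\<^sup>2) + \<alpha> * (\<Sum>i<d. (cmod (\<Sum>b<m. Bm i b * w b))\<^sup>2))"
    by (simp only: e1 e2 of_real_add of_real_mult)
  finally show ?thesis .
qed

lemma mm3_index:
  fixes A C :: "complex mat"
  assumes A: "A \<in> carrier_mat m m" and C: "C \<in> carrier_mat m m" and rs: "r < m" "s < m"
  shows "(A * C * A) $$ (r,s) = (\<Sum>b<m. (\<Sum>a<m. A $$ (r,a) * C $$ (a,b)) * A $$ (b,s))"
proof -
  have "(A*C*A) $$ (r,s) = (\<Sum>b<m. (A*C) $$ (r,b) * A $$ (b,s))"
    by (rule mm_index[OF mult_carrier_mat[OF A C] A rs])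
  also have "\<dots> = (\<Sum>b<m. (\<Sum>a<m. A $$ (r,a) * C $$ (a,b)) * A $$ (b,s))"
    by (intro sum.cong refl arg_cong2[where f="(*)"]) (use rs in \<open>simp add: mm_index[OF A C]\<close>)
  finally show ?thesis .
qed

lemma idx_lt: "j < n \<Longrightarrow> a < N \<Longrightarrow> j*N + a < n*(N::nat)"
proof -
  assume j: "j < n" and a: "a < N"
  have "j*N + a < (j+1)*N" using a by simp
  also have "\<dots> \<le> n*N" using j by (intro mult_right_mono) auto
  finally show ?thesis .
qed

lemma L2_sq: "(L2_set f A)\<^sup>2 = (\<Sum>i\<in>A. (f i)\<^sup>2)"
  unfolding L2_set_def by (simp add: sum_nonneg)

lemma psd_link:
  fixes B P :: "complex mat" and \<alpha> :: real
  assumes nN: "n > 0" "N > 0" and B: "B \<in> carrier_mat d (n*N)" and Pr: "orth_proj_rank n k P" and \<alpha>: "\<alpha> < 0"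
    and H: "\<And>u f. orthon n k u \<Longrightarrow> Lb (\<lambda>i j. B $$ (i,j)) d (n*N) (tens N k u f) \<le> sqrt (-1/\<alpha>) * nm (n*N) (tens N k u f)"
  shows "psd_mat (n*N) (tensor_id n N P * (1\<^sub>m (n*N) + complex_of_real \<alpha> \<cdot>\<^sub>m (mat_adjoint B * B)) * tensor_id n N P)"
proof -
  define m where "m = n*N"
  define T where "T = tensor_id n N P"
  define X where "X = 1\<^sub>m (n*N) + complex_of_real \<alpha> \<cdot>\<^sub>m (mat_adjoint B * B)"
  have Pc: "P \<in> carrier_mat n n" and Padj: "mat_adjoint P = P" using Pr unfolding orth_proj_rank_def by auto
  have hP: "cnj (P $$ (i,j)) = P $$ (j,i)" if "i < n" "j < n" for i j
    using adj_entry[OF Pc that(2,1)] Padj by simp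
  have Tc: "T \<in> carrier_mat m m" unfolding T_def m_def by (rule tensor_carrier)
  have hT': "cnj (T $$ (r,s)) = T $$ (s,r)" if "r < m" "s < m" for r s
    using that hP[OF div_lt div_lt] unfolding T_def m_def by (auto simp: tensor_index)
  have hT: "T $$ (r,s) = cnj (T $$ (s,r))" if "r < m" "s < m" for r s using hT'[OF that(2,1)] by simp
  have Bs: "mat_adjoint B \<in> carrier_mat m d" using adj_carrier[OF B] m_def by simp
  have Xc: "X \<in> carrier_mat m m" unfolding X_def m_def using Bs B m_def by auto
  have Xe: "X $$ (a,b) = (if a = b then 1 else 0) + complex_of_real \<alpha> * (\<Sum>i<d. cnj (B $$ (i,a)) * B $$ (i,b))"
    if ab: "a < m" "b < m" for a b
  proof -
    have "(mat_adjoint B * B) $$ (a,b) = (\<Sum>i<d. mat_adjoint B $$ (a,i) * B $$ (i,b))"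
      using mm_index[OF Bs _ ab] B m_def by simp
    also have "\<dots> = (\<Sum>i<d. cnj (B $$ (i,a)) * B $$ (i,b))"
      using adj_entry2[OF B] ab m_def by (intro sum.cong refl) auto
    finally show ?thesis unfolding X_def using ab Bs B m_def by simp
  qed
  have hX: "X $$ (a,b) = cnj (X $$ (b,a))" if "a < m" "b < m" for a b
    using that by (simp add: Xe cnj_sum mult.commute)
  have TXTc: "T * X * T \<in> carrier_mat m m" using Tc Xc by simp
  have herm: "mat_adjoint (T * X * T) = T * X * T"
    by (rule herm_adj[OF TXTc]) (rule herm_ABA[OF Tc Xc hT hX])
  have quad: "\<exists>r\<ge>0. ((T * X * T) *\<^sub>v v) \<bullet>c v = complex_of_real r" if v: "v \<in> carrier_vec m" for v
  proof -
    define w where "w b = (\<Sum>s<m. T $$ (b,s) * v $ s)" for b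
    have "((T * X * T) *\<^sub>v v) \<bullet>c v = (\<Sum>r<m. ((T * X * T) *\<^sub>v v) $ r * cnj (v $ r))"
      by (rule cprod_sum[OF v])
    also have "\<dots> = (\<Sum>r<m. (\<Sum>s<m. (\<Sum>b<m. (\<Sum>a<m. T $$ (r,a) * X $$ (a,b)) * T $$ (b,s)) * v $ s) * cnj (v $ r))"
      by (intro sum.cong refl arg_cong2[where f="(*)"])
         (auto simp: mv_index[OF TXTc v] mm3_index[OF Tc Xc] intro!: sum.cong)
    also have "\<dots> = (\<Sum>a<m. \<Sum>b<m. X $$ (a,b) * w b * cnj (w a))"
      unfolding w_def by (rule quad_sum) (rule hT')
    also have "\<dots> = (\<Sum>a<m. \<Sum>b<m. ((if a = b then 1 else 0) + complex_of_real \<alpha> * (\<Sum>i<d. cnj (B $$ (i,a)) * B $$ (i,b))) * w b * cnj (w a))"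
      by (intro sum.cong refl) (simp add: Xe)
    also have "\<dots> = complex_of_real ((\<Sum>a<m. (cmod (w a))\<^sup>2) + \<alpha> * (\<Sum>i<d. (cmod (\<Sum>b<m. B $$ (i,b) * w b))\<^sup>2))"
      by (rule quad_X)
    finally have eq: "((T * X * T) *\<^sub>v v) \<bullet>c v = complex_of_real ((\<Sum>a<m. (cmod (w a))\<^sup>2) + \<alpha> * (\<Sum>i<d. (cmod (\<Sum>b<m. B $$ (i,b) * w b))\<^sup>2))" .
    obtain u where u: "orthon n k u" and Pu: "\<forall>i<n. \<forall>j<n. P $$ (i,j) = (\<Sum>l<k. u (l,i) * cnj (u (l,j)))"
      using proj_decomp[OF Pr] by blast
    define f where "f p = (\<Sum>j<n. cnj (u (fst p, j)) * v $ (j*N + snd p))" for p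
    have wt: "w s = tens N k u f s" if s: "s < m" for s
    proof -
      have sN: "s mod N < N" using nN by simp
      have sn: "s div N < n" using s div_lt unfolding m_def by blast
      have "w s = (\<Sum>j<n. \<Sum>a<N. T $$ (s, j*N + a) * v $ (j*N + a))"
        unfolding w_def m_def by (rule sum_divmod)
      also have "\<dots> = (\<Sum>j<n. \<Sum>a<N. if a = s mod N then P $$ (s div N, j) * v $ (j*N + s mod N) else 0)"
      proof (intro sum.cong refl)
        fix j a assume j: "j \<in> {..<n}" and a: "a \<in> {..<N}"
        have "j*N + a < n*N" using j a by (simp add: idx_lt)
        then show "T $$ (s, j*N + a) * v $ (j*N + a) = (if a = s mod N then P $$ (s div N, j) * v $ (j*N + s mod N) else 0)"
          using s a unfolding T_def m_def by (auto simp: tensor_index)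
      qed
      also have "\<dots> = (\<Sum>j<n. P $$ (s div N, j) * v $ (j*N + s mod N))"
        using sN by simp
      also have "\<dots> = (\<Sum>j<n. \<Sum>l<k. u (l, s div N) * cnj (u (l,j)) * v $ (j*N + s mod N))"
        using Pu sn by (simp add: sum_distrib_right)
      also have "\<dots> = tens N k u f s"
        unfolding tens_def f_def by (simp add: sum.swap[of _ "{..<n}"] sum_distrib_left mult.assoc)
      finally show ?thesis .
    qed
    define c where "c = -1/\<alpha>"
    have c0: "0 < c" using \<alpha> unfolding c_def by simp
    have Lw: "Lb (\<lambda>i j. B $$ (i,j)) d m (tens N k u f) = Lb (\<lambda>i j. B $$ (i,j)) d m w"
      by (rule Lb_cong) (simp add: wt)
    have Nw: "nm m (tens N k u f) = nm m w" by (rule nm_cong) (simp add: wt)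
    have Hw: "Lb (\<lambda>i j. B $$ (i,j)) d m w \<le> sqrt c * nm m w"
      using H[OF u, of f] Lw Nw unfolding m_def c_def by simp
    then have "(Lb (\<lambda>i j. B $$ (i,j)) d m w)\<^sup>2 \<le> (sqrt c * nm m w)\<^sup>2"
      by (rule power_mono) (simp add: Lb_nonneg)
    then have Q: "(\<Sum>i<d. (cmod (\<Sum>b<m. B $$ (i,b) * w b))\<^sup>2) \<le> c * (\<Sum>a<m. (cmod (w a))\<^sup>2)"
      using c0 unfolding Lb_def nm_def by (simp add: L2_sq power_mult_distrib)
    have "\<alpha> * (c * (\<Sum>a<m. (cmod (w a))\<^sup>2)) \<le> \<alpha> * (\<Sum>i<d. (cmod (\<Sum>b<m. B $$ (i,b) * w b))\<^sup>2)"
      using Q \<alpha> by (intro mult_left_mono_neg) auto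
    moreover have "\<alpha> * c = -1" using \<alpha> unfolding c_def by simp
    ultimately have "0 \<le> (\<Sum>a<m. (cmod (w a))\<^sup>2) + \<alpha> * (\<Sum>i<d. (cmod (\<Sum>b<m. B $$ (i,b) * w b))\<^sup>2)"
      by (simp add: mult.assoc[symmetric])
    then show ?thesis using eq by blast
  qed
  show ?thesis
    unfolding psd_mat_def using TXTc herm quad unfolding T_def X_def m_def by auto
qed



lemma (in prob_space) event_bound:
  fixes BB :: "'a \<Rightarrow> complex mat" and y :: "nat \<Rightarrow> complex"
  assumes cg: "complex_gaussian_matrix M (1 / real (n*N)) dd (n*N) BB" and nN: "n > 0" "N > 0"
    and q: "0 < q" "q < 1" and dd: "real dd \<le> \<rho> * real (n*N)"
  shows "{\<omega>\<in>space M. a * (\<Sum>j<n*N. (cmod (y j))\<^sup>2) < (\<Sum>i<dd. (cmod (\<Sum>j<n*N. BB \<omega> $$ (i,j) * y j))\<^sup>2)} \<in> events"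
    and "measure M {\<omega>\<in>space M. a * (\<Sum>j<n*N. (cmod (y j))\<^sup>2) < (\<Sum>i<dd. (cmod (\<Sum>j<n*N. BB \<omega> $$ (i,j) * y j))\<^sup>2)}
           \<le> exp (- real (n*N) * (q * a + \<rho> * ln (1 - q)) / 2)"
proof -
  define nr where "nr = (\<Sum>j<n*N. (cmod (y j))\<^sup>2)"
  define E where "E = {\<omega>\<in>space M. a * nr < (\<Sum>i<dd. (cmod (\<Sum>j<n*N. BB \<omega> $$ (i,j) * y j))\<^sup>2)}"
  have s2: "0 < 1 / real (n*N)" using nN by simp
  have "E \<in> events \<and> measure M E \<le> exp (- real (n*N) * (q * a + \<rho> * ln (1 - q)) / 2)"
  proof (cases "nr = 0")
    case True
    then have y0: "y j = 0" if "j < n*N" for j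
      using that unfolding nr_def by (simp add: sum_nonneg_eq_0_iff)
    have "E = {}" unfolding E_def True by (auto simp: y0)
    then show ?thesis by simp
  next
    case False
    then have nr0: "0 < nr" unfolding nr_def by (simp add: sum_nonneg less_le)
    define t where "t = q * real (n*N) / (2 * nr)"
    have t0: "0 \<le> t" using q nr0 unfolding t_def by simp
    have tq: "2 * t * (1 / real (n*N)) * nr = q" using nr0 nN unfolding t_def by simp
    note ch = chernoff_gauss[OF cg s2, of y t a, folded nr_def]
    have ev: "E \<in> events" using ch(1) nr0 t0 tq q unfolding E_def by simp
    have "measure M E \<le> exp (- t * a * nr) * (1 / sqrt (1 - q)) ^ dd"
      using ch(2) nr0 t0 tq q unfolding E_def by simp
    also have "exp (- t * a * nr) = exp (- real (n*N) * (q * a) / 2)"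
      using nr0 unfolding t_def by (simp add: field_simps)
    also have "(1 / sqrt (1 - q)) ^ dd = exp (real dd * (- ln (1 - q) / 2))"
    proof -
      have "1 / sqrt (1 - q) = exp (- ln (1 - q) / 2)"
      proof -
        have "sqrt (1 - q) = (1 - q) powr (1/2)" using q by (simp add: powr_half_sqrt)
        also have "\<dots> = exp (ln (1 - q) / 2)" using q by (simp add: powr_def)
        finally show ?thesis by (simp add: exp_minus inverse_eq_divide)
      qed
      then show ?thesis by (simp add: exp_of_nat_mult[symmetric] mult.commute)
    qed
    also have "exp (real dd * (- ln (1 - q) / 2)) \<le> exp (\<rho> * real (n*N) * (- ln (1 - q) / 2))"
    proof -
      have "0 \<le> - ln (1 - q) / 2" using q by simp
      then have "real dd * (- ln (1 - q) / 2) \<le> \<rho> * real (n*N) * (- ln (1 - q) / 2)"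
        using dd by (rule mult_right_mono[rotated])
      then show ?thesis by (rule exp_mono)
    qed
    also have "exp (- real (n*N) * (q * a) / 2) * exp (\<rho> * real (n*N) * (- ln (1 - q) / 2))
        = exp (- real (n*N) * (q * a + \<rho> * ln (1 - q)) / 2)"
      by (simp add: mult_exp_exp field_simps)
    finally show ?thesis using ev by simp
  qed
  then show "{\<omega>\<in>space M. a * (\<Sum>j<n*N. (cmod (y j))\<^sup>2) < (\<Sum>i<dd. (cmod (\<Sum>j<n*N. BB \<omega> $$ (i,j) * y j))\<^sup>2)} \<in> events"
    and "measure M {\<omega>\<in>space M. a * (\<Sum>j<n*N. (cmod (y j))\<^sup>2) < (\<Sum>i<dd. (cmod (\<Sum>j<n*N. BB \<omega> $$ (i,j) * y j))\<^sup>2)}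
           \<le> exp (- real (n*N) * (q * a + \<rho> * ln (1 - q)) / 2)"
    unfolding E_def nr_def by auto
qed

lemma (in prob_space) main_n:
  fixes B :: "nat \<Rightarrow> nat \<Rightarrow> 'a \<Rightarrow> complex mat" and d :: "nat \<Rightarrow> nat \<Rightarrow> nat"
    and \<epsilon> a \<alpha> q \<kappa> \<rho> lam :: real
  assumes eps: "0 < \<epsilon>" "\<epsilon> \<le> 1/6" and a: "0 \<le> a" and \<alpha>: "\<alpha> < 0"
    and ac: "sqrt a * (1 + 12 * \<epsilon> * sqrt k) \<le> sqrt (-1/\<alpha>)"
    and k: "k > 0" and n: "n > 0" and q: "0 < q" "q < 1"
    and kap: "\<kappa> \<le> (q * a + \<rho> * ln (1 - q)) / 2"
    and nk: "real k * (4/\<epsilon>\<^sup>2 + ln 16) + 1 \<le> real n * \<kappa>"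
    and lim: "((\<lambda>N. real (d n N) / real (n * N)) \<longlongrightarrow> lam) sequentially" and lr: "lam < \<rho>"
    and cg: "\<And>N. N \<ge> 1 \<Longrightarrow> complex_gaussian_matrix M (1 / real (n * N)) (d n N) (n * N) (B n N)"
  shows "AE \<omega> in M. \<exists>N0. \<forall>N\<ge>N0. k_block_positive n N k
             (1\<^sub>m (n * N) + complex_of_real \<alpha> \<cdot>\<^sub>m (mat_adjoint (B n N \<omega>) * B n N \<omega>))"
proof -
  define Cn where "Cn = 4/\<epsilon>\<^sup>2 + ln 16"
  obtain N1 where N1: "\<And>N. N \<ge> N1 \<Longrightarrow> real (d n N) / real (n * N) < \<rho>"
    using order_tendstoD(2)[OF lim lr] unfolding eventually_sequentially by blast
  define N1' where "N1' = max N1 1"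
  have ddN: "real (d n N) \<le> \<rho> * real (n*N)" if "N \<ge> N1'" for N
  proof -
    have "N \<ge> N1" "N \<ge> 1" using that unfolding N1'_def by auto
    then have "real (d n N) / real (n * N) < \<rho>" "0 < real (n*N)" using N1 n by auto
    then show ?thesis by (simp add: field_simps)
  qed
  define Net where "Net N = (\<lambda>(u,f). tens N k u f) ` (GU n k \<epsilon> \<times> GF N k \<epsilon>)" for N
  define Ev where "Ev N y = {\<omega>\<in>space M. a * (\<Sum>j<n*N. (cmod (y j))\<^sup>2) < (\<Sum>i<d n N. (cmod (\<Sum>j<n*N. B n N \<omega> $$ (i,j) * y j))\<^sup>2)}" for N y
  define A where "A N = (if N1' \<le> N then (\<Union>y\<in>Net N. Ev N y) else {})" for N
  define CU where "CU = real (card (GU n k \<epsilon>))"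
  have finGU: "finite (GU n k \<epsilon>)" by (rule finite_GU[OF eps(1) n])
  have CU0: "0 \<le> CU" unfolding CU_def by simp
  have finNet: "finite (Net N)" if "N > 0" for N
    unfolding Net_def using finGU card_GF[OF eps(1) that k] by auto
  have cardNet: "real (card (Net N)) \<le> CU * exp (real (k*N) * Cn)" if "N > 0" for N
  proof -
    have "card (Net N) \<le> card (GU n k \<epsilon> \<times> GF N k \<epsilon>)" unfolding Net_def by (rule card_image_le) (use finGU card_GF[OF eps(1) that k] in auto)
    also have "\<dots> = card (GU n k \<epsilon>) * card (GF N k \<epsilon>)" by (rule card_cartesian_product)
    finally have "real (card (Net N)) \<le> CU * real (card (GF N k \<epsilon>))" unfolding CU_def by (simp flip: of_nat_mult)
    also have "\<dots> \<le> CU * (exp (4 * real (k*N) / \<epsilon>\<^sup>2) * 16 ^ (k*N))"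
      using card_GF[OF eps(1) that k] CU0 by (intro mult_left_mono) auto
    also have "exp (4 * real (k*N) / \<epsilon>\<^sup>2) * 16 ^ (k*N) = exp (real (k*N) * Cn)"
    proof -
      have "exp (real (k*N) * ln 16) = exp (ln 16) ^ (k*N)" by (rule exp_of_nat_mult)
      then have "(16::real) ^ (k*N) = exp (real (k*N) * ln 16)" by simp
      then show ?thesis by (simp add: Cn_def mult_exp_exp distrib_left)
    qed
    finally show ?thesis .
  qed
  have evs: "Ev N y \<in> events" if "N \<ge> N1'" for N y
    unfolding Ev_def using event_bound(1)[OF cg _ _ q ddN[OF that], where a=a and y=y] n that unfolding N1'_def by auto
  have evb: "measure M (Ev N y) \<le> exp (- real (n*N) * \<kappa>)" if "N \<ge> N1'" for N y
  proof -
    have "measure M (Ev N y) \<le> exp (- real (n*N) * (q * a + \<rho> * ln (1 - q)) / 2)"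
      unfolding Ev_def using event_bound(2)[OF cg _ _ q ddN[OF that], where a=a and y=y] n that unfolding N1'_def by auto
    also have "\<dots> \<le> exp (- real (n*N) * \<kappa>)"
    proof (rule exp_mono)
      have "real (n*N) * \<kappa> \<le> real (n*N) * ((q * a + \<rho> * ln (1 - q)) / 2)"
        using kap by (intro mult_left_mono) auto
      then show "- real (n*N) * (q * a + \<rho> * ln (1 - q)) / 2 \<le> - real (n*N) * \<kappa>" by simp
    qed
    finally show ?thesis .
  qed
  have Aev: "A N \<in> events" for N
    unfolding A_def using evs finNet by (auto intro!: sets.finite_UN simp: N1'_def)
  have Ab: "measure M (A N) \<le> CU * exp (- real N)" for N
  proof (cases "N1' \<le> N")
    case True
    have N0: "N > 0" using True unfolding N1'_def by simp
    have "measure M (A N) \<le> (\<Sum>y\<in>Net N. measure M (Ev N y))"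
      unfolding A_def using True by (simp add: measure_UNION_le finNet[OF N0] evs)
    also have "\<dots> \<le> (\<Sum>y\<in>Net N. exp (- real (n*N) * \<kappa>))" by (rule sum_mono) (rule evb[OF True])
    also have "\<dots> = real (card (Net N)) * exp (- real (n*N) * \<kappa>)" by simp
    also have "\<dots> \<le> CU * exp (real (k*N) * Cn) * exp (- real (n*N) * \<kappa>)"
      by (rule mult_right_mono[OF cardNet[OF N0]]) simp
    also have "\<dots> = CU * exp (real N * (real k * Cn - real n * \<kappa>))"
      by (simp add: mult.assoc mult_exp_exp algebra_simps)
    also have "\<dots> \<le> CU * exp (- real N)"
    proof (intro mult_left_mono CU0 exp_mono)
      have "real k * Cn - real n * \<kappa> \<le> -1" using nk unfolding Cn_def by simp
      then have "real N * (real k * Cn - real n * \<kappa>) \<le> real N * (-1)" by (intro mult_left_mono) auto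
      then show "real N * (real k * Cn - real n * \<kappa>) \<le> - real N" by simp
    qed
    finally show ?thesis .
  next
    case False then show ?thesis using CU0 by (simp add: A_def)
  qed
  have summ: "summable (\<lambda>N. measure M (A N))"
  proof (rule summable_comparison_test')
    show "summable (\<lambda>N. CU * exp (- real N))"
    proof (rule summable_mult)
      have e: "exp (- real N) = exp (-1) ^ N" for N
        using exp_of_nat_mult[of N "-1"] by simp
      have "summable (\<lambda>N. exp (-1::real) ^ N)" by (rule summable_geometric) simp
      then show "summable (\<lambda>N. exp (- real N))" by (simp only: e)
    qed
    fix N :: nat assume "N \<ge> 0"
    show "norm (measure M (A N)) \<le> CU * exp (- real N)" using Ab by simp
  qed
  have "AE \<omega> in M. eventually (\<lambda>N. \<omega> \<in> space M - A N) sequentially"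
    by (rule borel_cantelli_AE1[OF Aev]) (auto simp: summ emeasure_eq_measure)
  moreover have "AE \<omega> in M. \<omega> \<in> space M" by (rule AE_space)
  ultimately show ?thesis
  proof eventually_elim
    case (elim \<omega>)
    then have \<omega>: "\<omega> \<in> space M" and ev: "eventually (\<lambda>N. \<omega> \<in> space M - A N) sequentially" by auto
    obtain N2 where N2: "\<And>N. N \<ge> N2 \<Longrightarrow> \<omega> \<notin> A N" using ev unfolding eventually_sequentially by auto
    show "\<exists>N0. \<forall>N\<ge>N0. k_block_positive n N k (1\<^sub>m (n * N) + complex_of_real \<alpha> \<cdot>\<^sub>m (mat_adjoint (B n N \<omega>) * B n N \<omega>))"
    proof (intro exI allI impI)
      fix N assume N: "max N1' N2 \<le> N"
      then have NN1: "N1' \<le> N" and NN2: "N2 \<le> N" by auto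
      have N0: "N > 0" using NN1 unfolding N1'_def by simp
      have Bc: "B n N \<omega> \<in> carrier_mat (d n N) (n*N)"
        using cg[of N] N0 \<omega> unfolding complex_gaussian_matrix_def by auto
      have good: "(\<Sum>i<d n N. (cmod (\<Sum>j<n*N. B n N \<omega> $$ (i,j) * y j))\<^sup>2) \<le> a * (\<Sum>j<n*N. (cmod (y j))\<^sup>2)"
        if y: "y \<in> Net N" for y
      proof -
        have "\<omega> \<notin> Ev N y" using N2[OF NN2] NN1 y unfolding A_def by auto
        then show ?thesis using \<omega> unfolding Ev_def by auto
      qed
      have net: "Lb (\<lambda>i j. B n N \<omega> $$ (i,j)) (d n N) (n*N) (tens N k u f) \<le> sqrt a * nm (n*N) (tens N k u f)"
        if "u \<in> GU n k \<epsilon>" "f \<in> GF N k \<epsilon>" for u f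
      proof -
        have "tens N k u f \<in> Net N" unfolding Net_def using that by auto
        note g = good[OF this]
        have "Lb (\<lambda>i j. B n N \<omega> $$ (i,j)) (d n N) (n*N) (tens N k u f)
            = sqrt (\<Sum>i<d n N. (cmod (\<Sum>j<n*N. B n N \<omega> $$ (i,j) * tens N k u f j))\<^sup>2)"
          unfolding Lb_def L2_set_def by simp
        also have "\<dots> \<le> sqrt (a * (\<Sum>j<n*N. (cmod (tens N k u f j))\<^sup>2))" using g by simp
        also have "\<dots> = sqrt a * nm (n*N) (tens N k u f)" unfolding nm_def L2_set_def by (simp add: real_sqrt_mult)
        finally show ?thesis .
      qed
      have H: "Lb (\<lambda>i j. B n N \<omega> $$ (i,j)) (d n N) (n*N) (tens N k u f) \<le> sqrt (-1/\<alpha>) * nm (n*N) (tens N k u f)"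
        if "orthon n k u" for u f
        by (rule det_main[OF eps a ac n N0 k net that])
      show "k_block_positive n N k (1\<^sub>m (n * N) + complex_of_real \<alpha> \<cdot>\<^sub>m (mat_adjoint (B n N \<omega>) * B n N \<omega>))"
        unfolding k_block_positive_def
        using psd_link[OF n N0 Bc _ \<alpha> H] by blast
    qed
  qed
qed



theorem proposition6p8:
  fixes M :: "'a measure" and lam \<alpha> :: real and d :: "nat \<Rightarrow> nat \<Rightarrow> nat"
    and B :: "nat \<Rightarrow> nat \<Rightarrow> 'a \<Rightarrow> complex mat"
  assumes "prob_space M"
    and "lam > 1" and "\<alpha> < 0"
    and "lam + 2 * sqrt lam < - 1 / \<alpha>" and "- 1 / \<alpha> < (1 + sqrt lam)^2"
    and "\<And>n. n \<ge> 1 \<Longrightarrow> ((\<lambda>N. real (d n N) / real (n * N)) \<longlongrightarrow> lam) sequentially"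
    and "\<And>n N. n \<ge> 1 \<Longrightarrow> N \<ge> 1 \<Longrightarrow>
           complex_gaussian_matrix M (1 / real (n * N)) (d n N) (n * N) (B n N)"
  shows "\<forall>k \<ge> 1. \<exists>n0. \<forall>n \<ge> n0. AE \<omega> in M. \<exists>N0. \<forall>N \<ge> N0.
           k_block_positive n N k
             (1\<^sub>m (n * N) + complex_of_real \<alpha> \<cdot>\<^sub>m (mat_adjoint (B n N \<omega>) * B n N \<omega>))"
proof -
  interpret prob_space M by (rule assms(1))
  define c where "c = -1/\<alpha>"
  have lamc: "lam < c"
  proof -
    have "0 \<le> sqrt lam" using assms(2) by simp
    then show ?thesis using assms(4) unfolding c_def by linarith
  qed
  define a where "a = (lam + c) / 2"
  define \<rho> where "\<rho> = (lam + a) / 2"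
  have a0: "0 < a" and ac: "a < c" and r0: "0 < \<rho>" and lr: "lam < \<rho>" and ra: "\<rho> < a"
    using lamc assms(2) unfolding a_def \<rho>_def by (auto simp: field_simps)
  have sac: "sqrt a < sqrt c" using ac by simp
  have sa0: "0 < sqrt a" using a0 by simp
  show ?thesis
  proof (intro allI impI)
    fix k :: nat assume k1: "1 \<le> k"
    have k0: "k > 0" using k1 by simp
    define \<epsilon> where "\<epsilon> = min (1/6) ((sqrt c / sqrt a - 1) / (12 * sqrt k))"
    have r1: "0 < sqrt c / sqrt a - 1" using sac sa0 by (simp add: field_simps)
    have eps0: "0 < \<epsilon>" unfolding \<epsilon>_def using r1 k0 by simp
    have eps6: "\<epsilon> \<le> 1/6" unfolding \<epsilon>_def by simp
    have acc: "sqrt a * (1 + 12 * \<epsilon> * sqrt k) \<le> sqrt (-1/\<alpha>)"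
    proof -
      have "\<epsilon> \<le> (sqrt c / sqrt a - 1) / (12 * sqrt k)" unfolding \<epsilon>_def by simp
      then have "12 * \<epsilon> * sqrt k \<le> sqrt c / sqrt a - 1" using k0 by (simp add: field_simps)
      then have "sqrt a * (1 + 12 * \<epsilon> * sqrt k) \<le> sqrt a * (sqrt c / sqrt a)"
        using sa0 by (intro mult_left_mono) auto
      also have "\<dots> = sqrt c" using sa0 by simp
      finally show ?thesis unfolding c_def .
    qed
    define q where "q = min (1/2) ((a - \<rho>) / (4 * \<rho>))"
    have q0: "0 < q" and q2: "q \<le> 1/2" and qr: "q \<le> (a - \<rho>) / (4 * \<rho>)"
      unfolding q_def using ra r0 by auto
    have q1: "q < 1" using q2 by simp
    define \<kappa> where "\<kappa> = q * (a - \<rho>) / 4"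
    have kap0: "0 < \<kappa>" unfolding \<kappa>_def using q0 ra by simp
    have kap: "\<kappa> \<le> (q * a + \<rho> * ln (1 - q)) / 2"
    proof -
      have "- q - 2 * q\<^sup>2 \<le> ln (1 - q)" by (rule ln_one_minus_pos_lower_bound) (use q0 q2 in auto)
      then have l: "\<rho> * (- q - 2 * q\<^sup>2) \<le> \<rho> * ln (1 - q)" using r0 by (intro mult_left_mono) auto
      have "2 * \<rho> * q \<le> (a - \<rho>) / 2" using qr r0 by (simp add: field_simps)
      then have "q * (2 * \<rho> * q) \<le> q * ((a - \<rho>) / 2)" using q0 by (intro mult_left_mono) auto
      then have h: "2 * (\<rho> * q * q) \<le> (q * a - q * \<rho>) / 2" by (simp add: algebra_simps)
      have e1: "\<rho> * (- q - 2 * q\<^sup>2) = - (q * \<rho>) - 2 * (\<rho> * q * q)" by (simp add: power2_eq_square algebra_simps)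
      have e2: "q * (a - \<rho>) / 2 = (q * a - q * \<rho>) / 2" by (simp add: algebra_simps)
      have "q * (a - \<rho>) / 2 \<le> q * a + \<rho> * (- q - 2 * q\<^sup>2)"
      proof -
        have gen: "(Y-Z)/2 \<le> Y + (-Z - 2*X)" if "2*X \<le> (Y - Z)/2" for X Y Z :: real using that by (simp add: field_simps)
        show ?thesis unfolding e1 e2 by (rule gen[OF h])
      qed
      then show ?thesis using l unfolding \<kappa>_def by simp
    qed
    define n0 where "n0 = nat (ceiling ((real k * (4/\<epsilon>\<^sup>2 + ln 16) + 1) / \<kappa>)) + 1"
    show "\<exists>n0. \<forall>n\<ge>n0. AE \<omega> in M. \<exists>N0. \<forall>N\<ge>N0. k_block_positive n N k
             (1\<^sub>m (n * N) + complex_of_real \<alpha> \<cdot>\<^sub>m (mat_adjoint (B n N \<omega>) * B n N \<omega>))"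
    proof (intro exI[of _ n0] allI impI)
      fix n assume n: "n0 \<le> n"
      have n0': "n > 0" using n unfolding n0_def by simp
      have "(real k * (4/\<epsilon>\<^sup>2 + ln 16) + 1) / \<kappa> \<le> real n"
      proof -
        have "(real k * (4/\<epsilon>\<^sup>2 + ln 16) + 1) / \<kappa> \<le> real (nat (ceiling ((real k * (4/\<epsilon>\<^sup>2 + ln 16) + 1) / \<kappa>)))"
          by (rule real_nat_ceiling_ge)
        also have "\<dots> \<le> real n"
        proof -
          have "nat (ceiling ((real k * (4/\<epsilon>\<^sup>2 + ln 16) + 1) / \<kappa>)) \<le> n" using n unfolding n0_def by linarith
          then show ?thesis by (simp only: of_nat_le_iff)
        qed
        finally show ?thesis .
      qed
      then have nk: "real k * (4/\<epsilon>\<^sup>2 + ln 16) + 1 \<le> real n * \<kappa>" using kap0 by (simp add: field_simps)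
      show "AE \<omega> in M. \<exists>N0. \<forall>N\<ge>N0. k_block_positive n N k
             (1\<^sub>m (n * N) + complex_of_real \<alpha> \<cdot>\<^sub>m (mat_adjoint (B n N \<omega>) * B n N \<omega>))"
      proof -
        have lim: "((\<lambda>N. real (d n N) / real (n * N)) \<longlongrightarrow> lam) sequentially" using assms(6) n0' by simp
        have cgn: "complex_gaussian_matrix M (1 / real (n * N)) (d n N) (n * N) (B n N)" if "1 \<le> N" for N
          using assms(7)[of n N] n0' that by simp
        show ?thesis
          by (rule main_n[where d=d and B=B and n=n and k=k, OF eps0 eps6 less_imp_le[OF a0] assms(3) acc k0 n0' q0 q1 kap nk lim lr cgn])
      qed
    qed
  qed
qed



end
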